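(* Consider the problem $\min_{x\in\mathbb R^n} f(x)$ subject to $Ax=b$, where $f:\mathbb R^n\to\mathbb R$ is convex with $L$-Lipschitz continuous gradient, $A\in\mathbb R^{m\times n}$, $b\in\mathbb R^m$, and assume the KKT set $\Omega$ is nonempty. Let $\{(x_k,\lambda_k)\}_{k\ge0}$ be generated by the accelerated augmented Lagrangian method in Case II described in the context, with $\gamma\le1/L$, $\rho\in(0,1)$ and $\eta\in(\rho,1)$, and let $(x^*,\lambda^* )\in\Omega$ be the limit of $\{(x_k,\lambda_k)\}_{k\ge0}$. Then $\|\nabla f(x_k)+A^\top\lambda_k\|=o(1/t_k)$ as $k\to+\infty$, and $\sum_{k=1}^{+\infty} t_{k+1}\|\nabla f(x_k)+A^\top\lambda_k\|^2<+\infty$.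
   Context: The KKT set is $\Omega=\{(x^*,\lambda^* )\in\mathbb R^n\times\mathbb R^m: Ax^*=b,\ \nabla f(x^* )+A^\top\lambda^*=0\}$. Parameter sequence: $\{t_k\}_{k\ge1}$ is nondecreasing, $t_1=1$, $t_k>1$ for all $k>2$, $t_k\to+\infty$, and $t_{k+1}^2-t_k^2\le\rho t_{k+1}$ for all $k\ge 1$. Fix $\eta$, $\gamma>0$, $\delta>0$, $\beta\ge0$. Algorithm (Case II): initial points $x_0=x_1\in\mathbb R^n$, $\lambda_0=\lambda_1\in\mathbb R^m$. For $k=1,2,\dots$: set $\alpha_k=(t_{k+1}-\eta)/\eta$, $c_k=t_{k+1}/\eta$, $\bar x_k=x_k+\frac{t_k-1}{t_{k+1}}(x_k-x_{k-1})$, $\bar\lambda_k=\lambda_k+\frac{t_k-1}{t_{k+1}}(\lambda_k-\lambda_{k-1})$, $p_k=c_k\bar\lambda_k-\alpha_k\lambda_k$, $r_k=\alpha_kAx_k+b$; $x_{k+1}=\arg\min_{x}\{\langle\nabla f(\bar x_k),x\rangle+\frac\beta2\|Ax-b\|^2+\frac1{2\gamma}\|x-\bar x_k\|^2+\langle p_k,Ax-b\rangle+\frac\delta2\|c_kAx-r_k\|^2\}$; $\lambda_{k+1}=\bar\lambda_k+\delta(c_kAx_{k+1}-r_k)$. *)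

theory Defs
  imports "HOL-Analysis.Analysis" "HOL-Library.Landau_Symbols"
begin

definition KKT_set ::
  "(real^'n \<Rightarrow> real^'n) \<Rightarrow> real^'n^'m \<Rightarrow> real^'m \<Rightarrow> ((real^'n) \<times> (real^'m)) set" where
  "KKT_set gf A b = {(xs, ls). A *v xs = b \<and> gf xs + transpose A *v ls = 0}"

definition alpha_k :: "(nat \<Rightarrow> real) \<Rightarrow> real \<Rightarrow> nat \<Rightarrow> real" where
  "alpha_k t \<eta> k = (t (Suc k) - \<eta>) / \<eta>"

definition c_k :: "(nat \<Rightarrow> real) \<Rightarrow> real \<Rightarrow> nat \<Rightarrow> real" where
  "c_k t \<eta> k = t (Suc k) / \<eta>"

definition extrap :: "(nat \<Rightarrow> real) \<Rightarrow> (nat \<Rightarrow> 'a::real_vector) \<Rightarrow> nat \<Rightarrow> 'a" where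
  "extrap t z k = z k + ((t k - 1) / t (Suc k)) *\<^sub>R (z k - z (k - 1))"

definition subproblem_obj ::
  "(real^'n \<Rightarrow> real^'n) \<Rightarrow> real^'n^'m \<Rightarrow> real^'m \<Rightarrow> (nat \<Rightarrow> real) \<Rightarrow> real \<Rightarrow> real \<Rightarrow> real \<Rightarrow> real
    \<Rightarrow> (nat \<Rightarrow> real^'n) \<Rightarrow> (nat \<Rightarrow> real^'m) \<Rightarrow> nat \<Rightarrow> real^'n \<Rightarrow> real" where
  "subproblem_obj gf A b t \<eta> \<gamma> \<delta> \<beta> x l k y =
     (let xb = extrap t x k; lb = extrap t l k;
          p = c_k t \<eta> k *\<^sub>R lb - alpha_k t \<eta> k *\<^sub>R l k;
          r = alpha_k t \<eta> k *\<^sub>R (A *v x k) + b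
      in gf xb \<bullet> y + \<beta> / 2 * (norm (A *v y - b))\<^sup>2 + 1 / (2 * \<gamma>) * (norm (y - xb))\<^sup>2
         + p \<bullet> (A *v y - b) + \<delta> / 2 * (norm (c_k t \<eta> k *\<^sub>R (A *v y) - r))\<^sup>2)"

end

theory Submission
  imports Defs
begin

lemma tangent_ineq:
  fixes f :: "'a::real_inner \<Rightarrow> real"
  assumes cvx: "convex_on UNIV f" and der: "\<And>z. (f has_derivative (\<lambda>h. gf z \<bullet> h)) (at z)"
  shows "f x + gf x \<bullet> (y - x) \<le> f y"
proof -
  define g where "g s = f (x + s *\<^sub>R (y - x))" for s :: real
  have gc: "convex_on UNIV g"
  proof (rule convex_onI)
    fix u a b :: real assume u: "u > 0" "u < 1"
    have "x + ((1 - u) * a + u * b) *\<^sub>R (y - x) = (1 - u) *\<^sub>R (x + a *\<^sub>R (y - x)) + u *\<^sub>R (x + b *\<^sub>R (y - x))"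
      by (simp add: algebra_simps)
    then show "g ((1 - u) *\<^sub>R a + u *\<^sub>R b) \<le> (1 - u) * g a + u * g b"
      unfolding g_def using convex_onD[OF cvx, of u] u by simp
  qed simp
  have gd: "(g has_field_derivative (gf x \<bullet> (y - x))) (at 0 within UNIV)"
  proof -
    have "((\<lambda>s. x + s *\<^sub>R (y - x)) has_derivative (\<lambda>s. s *\<^sub>R (y - x))) (at 0)"
      by (auto intro!: derivative_eq_intros)
    from has_derivative_compose[OF this der[of "x + 0 *\<^sub>R (y - x)"]]
    have "(g has_derivative (\<lambda>s. gf x \<bullet> (s *\<^sub>R (y - x)))) (at 0)"
      unfolding g_def o_def by (simp add: o_def)
    then show ?thesis unfolding has_field_derivative_def
      by (rule has_derivative_eq_rhs) (auto simp: fun_eq_iff)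
  qed
  have "g 1 - g 0 \<ge> (gf x \<bullet> (y - x)) * (1 - 0)"
    by (rule convex_on_imp_above_tangent[OF gc]) (use gd in auto)
  then show ?thesis unfolding g_def by simp
qed

lemma descent_ineq:
  fixes f :: "'a::real_inner \<Rightarrow> real"
  assumes der: "\<And>z. (f has_derivative (\<lambda>h. gf z \<bullet> h)) (at z)"
    and lip: "\<And>y z. norm (gf y - gf z) \<le> L * norm (y - z)"
  shows "f (x + h) \<le> f x + gf x \<bullet> h + L / 2 * (norm h)\<^sup>2"
proof -
  define g where "g s = f (x + s *\<^sub>R h) - s * (gf x \<bullet> h) - L / 2 * s\<^sup>2 * (norm h)\<^sup>2" for s :: real
  have gd: "(g has_real_derivative ((gf (x + s *\<^sub>R h) - gf x) \<bullet> h - L * s * (norm h)\<^sup>2)) (at s)" for s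
  proof -
    have "((\<lambda>s. x + s *\<^sub>R h) has_derivative (\<lambda>u. u *\<^sub>R h)) (at s)"
      by (auto intro!: derivative_eq_intros)
    from has_derivative_compose[OF this der[of "x + s *\<^sub>R h"]]
    have "((\<lambda>s. f (x + s *\<^sub>R h)) has_derivative (\<lambda>u. gf (x + s *\<^sub>R h) \<bullet> (u *\<^sub>R h))) (at s)"
      by (simp add: o_def)
    then have d1: "((\<lambda>s. f (x + s *\<^sub>R h)) has_real_derivative (gf (x + s *\<^sub>R h) \<bullet> h)) (at s)"
      unfolding has_field_derivative_def by (rule has_derivative_eq_rhs) (auto simp: fun_eq_iff)
    show ?thesis unfolding g_def
      by (rule derivative_eq_intros d1 refl | simp add: inner_diff_left algebra_simps)+
  qed
  have "g 1 \<le> g 0"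
  proof (rule DERIV_nonpos_imp_nonincreasing[of 0 1 g])
    fix s :: real assume s: "0 \<le> s" "s \<le> 1"
    have "(gf (x + s *\<^sub>R h) - gf x) \<bullet> h \<le> norm (gf (x + s *\<^sub>R h) - gf x) * norm h"
      by (rule norm_cauchy_schwarz)
    also have "\<dots> \<le> L * norm (s *\<^sub>R h) * norm h"
      using lip[of "x + s *\<^sub>R h" x] by (simp add: mult_right_mono)
    also have "\<dots> = L * s * (norm h)\<^sup>2" using s by (simp add: power2_eq_square)
    finally show "\<exists>y. DERIV g s :> y \<and> y \<le> 0" using gd[of s] by auto
  qed simp
  then show ?thesis unfolding g_def by simp
qed

lemma adj: "inner (A *v h) u = inner h (transpose A *v (u::real^'m))" for A :: "real^'n^'m"
  by (metis dot_lmul_matrix inner_commute transpose_matrix_vector)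

lemma adj2: "inner h (u v* A) = inner u (A *v h)" for A :: "real^'n^'m"
  by (metis dot_lmul_matrix inner_commute)

lemma quad_opt:
  fixes A :: "real^'n^'m" and g z xb :: "real^'n"
  assumes mn: "\<And>y. \<phi> z \<le> \<phi> y"
    and phi: "\<phi> = (\<lambda>y. g \<bullet> y + \<beta> / 2 * (norm (A *v y - b))\<^sup>2 + 1 / (2 * \<gamma>) * (norm (y - xb))\<^sup>2
         + p \<bullet> (A *v y - b) + \<delta> / 2 * (norm (c *\<^sub>R (A *v y) - r))\<^sup>2)"
  shows "g + \<beta> *\<^sub>R (transpose A *v (A *v z - b)) + (1/\<gamma>) *\<^sub>R (z - xb) + transpose A *v p
     + (\<delta> * c) *\<^sub>R (transpose A *v (c *\<^sub>R (A *v z) - r)) = 0"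
proof -
  define D where "D h = g \<bullet> h + \<beta> * ((A *v z - b) \<bullet> (A *v h)) + (1/\<gamma>) * ((z - xb) \<bullet> h)
     + p \<bullet> (A *v h) + \<delta> * ((c *\<^sub>R (A *v z) - r) \<bullet> (c *\<^sub>R (A *v h)))" for h
  have hA: "((*v) A has_derivative (*v) A) F" for F
    by (simp add: bounded_linear_imp_has_derivative)
  have "(\<phi> has_derivative D) (at z)"
    unfolding phi D_def power2_norm_eq_inner
    apply (rule derivative_eq_intros hA refl)+
    apply (simp add: fun_eq_iff inner_commute algebra_simps matrix_vector_mult_diff_distrib
       matrix_vector_right_distrib matrix_vector_mult_scaleR inner_diff_right inner_add_right)
    done
  then have "D = (\<lambda>h. 0)"
    by (intro differential_zero_maxmin[of z UNIV]) (use mn in auto)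
  define V where "V = g + \<beta> *\<^sub>R (transpose A *v (A *v z - b)) + (1/\<gamma>) *\<^sub>R (z - xb) + transpose A *v p
     + (\<delta> * c) *\<^sub>R (transpose A *v (c *\<^sub>R (A *v z) - r))"
  have "D h = V \<bullet> h" for h
    unfolding D_def V_def
    by (simp add: adj2 inner_add_left inner_commute matrix_vector_mult_scaleR algebra_simps)
  then have "V \<bullet> V = 0" using \<open>D = _\<close> by (metis)
  then show ?thesis unfolding V_def by simp
qed

lemma inert_id:
  fixes za zb zc zs :: "'a::real_inner"
  assumes th: "s = \<theta> * T + 1"
  shows "(1/2) * (norm (zb + (\<sigma>*T) *\<^sub>R (zc - zb) - zs))\<^sup>2 + ((\<sigma>-1)/2) * (norm (zb - zs))\<^sup>2
     - ((1/2) * (norm (za + (\<sigma> * s) *\<^sub>R (zb - za) - zs))\<^sup>2 + ((\<sigma>-1)/2) * (norm (za - zs))\<^sup>2)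
   = \<sigma>*T*((zb + (\<sigma>*T) *\<^sub>R (zc - zb) - zs) \<bullet> (zc - (zb + \<theta> *\<^sub>R (zb - za))))
     - \<sigma>\<^sup>2*T\<^sup>2/2*(norm (zc - (zb + \<theta> *\<^sub>R (zb - za))))\<^sup>2 - (\<sigma>-1)*\<sigma>*(2 * s-1)/2*(norm (zb - za))\<^sup>2"
proof -
  obtain a b c where abc: "za = zs + a" "zb = zs + b" "zc = zs + c"
    by (metis add.commute diff_add_cancel)
  show ?thesis
    unfolding abc th power2_norm_eq_inner
    apply (simp add: inner_simps inner_commute algebra_simps power2_eq_square)
    apply (simp add: field_simps)
    done
qed




lemma adj3: "(transpose A *v v) \<bullet> h = v \<bullet> (A *v h)" for A :: "real^'n^'m"
  by (metis adj inner_commute)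


locale aalm =
  fixes f :: "real^'n \<Rightarrow> real" and gf :: "real^'n \<Rightarrow> real^'n"
    and A :: "real^'n^'m" and b :: "real^'m"
    and L \<rho> \<eta> \<gamma> \<delta> \<beta> :: real and t :: "nat \<Rightarrow> real"
    and x :: "nat \<Rightarrow> real^'n" and l :: "nat \<Rightarrow> real^'m"
    and xs :: "real^'n" and ls :: "real^'m"
  assumes f_convex: "convex_on UNIV f"
    and f_grad: "\<And>z. (f has_derivative (\<lambda>h. gf z \<bullet> h)) (at z)"
    and L_pos: "L > 0"
    and grad_lip: "\<And>y z. norm (gf y - gf z) \<le> L * norm (y - z)"
    and t_mono: "\<And>k. k \<ge> 1 \<Longrightarrow> t k \<le> t (Suc k)"
    and t_1: "t 1 = 1"
    and t_growth: "\<And>k. k \<ge> 1 \<Longrightarrow> (t (Suc k))\<^sup>2 - (t k)\<^sup>2 \<le> \<rho> * t (Suc k)"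
    and rho: "0 < \<rho>" "\<rho> < 1"
    and eta: "\<rho> < \<eta>" "\<eta> < 1"
    and gamma: "\<gamma> > 0" "\<gamma> \<le> 1 / L"
    and delta: "\<delta> > 0"
    and beta: "\<beta> \<ge> 0"
    and init: "x 0 = x 1" "l 0 = l 1"
    and x_step: "\<And>k y. k \<ge> 1 \<Longrightarrow>
        subproblem_obj gf A b t \<eta> \<gamma> \<delta> \<beta> x l k (x (Suc k))
          \<le> subproblem_obj gf A b t \<eta> \<gamma> \<delta> \<beta> x l k y"
    and l_step: "\<And>k. k \<ge> 1 \<Longrightarrow>
        l (Suc k) = extrap t l k + \<delta> *\<^sub>R (c_k t \<eta> k *\<^sub>R (A *v x (Suc k))
                     - (alpha_k t \<eta> k *\<^sub>R (A *v x k) + b))"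
    and lim_x: "x \<longlonglongrightarrow> xs"
    and lim_l: "l \<longlonglongrightarrow> ls"
    and lim_KKT: "(xs, ls) \<in> KKT_set gf A b"
begin

definition "\<sigma> = 1 / \<eta>"
definition "Psi y = f y - f xs + ls \<bullet> (A *v y - b)"
definition "w k = x k + (\<sigma> * t (Suc k)) *\<^sub>R (x (Suc k) - x k)"
definition "mu k = l k + (\<sigma> * t (Suc k)) *\<^sub>R (l (Suc k) - l k)"

lemma eta_pos: "\<eta> > 0" using rho eta by linarith
lemma sigma_gt1: "\<sigma> > 1" using eta eta_pos by (simp add: \<sigma>_def)
lemma sigma_eta: "\<sigma> * \<eta> = 1" using eta_pos by (simp add: \<sigma>_def)

lemma t_ge1: "k \<ge> 1 \<Longrightarrow> t k \<ge> 1"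
proof (induction k rule: dec_induct)
  case base then show ?case using t_1 by simp
next
  case (step n) then show ?case using t_mono[of n] by linarith
qed

lemma t_incr: assumes "k \<ge> 1" shows "t (Suc k) \<le> t k + \<rho>"
proof -
  have a: "t k \<ge> 1" "t (Suc k) \<ge> 1" using t_ge1 assms by auto
  have "(t (Suc k) - t k) * (t (Suc k) + t k) \<le> \<rho> * t (Suc k)"
    using t_growth[OF assms] by (simp add: power2_eq_square algebra_simps)
  also have "\<dots> \<le> \<rho> * (t (Suc k) + t k)" using rho a by simp
  finally have "(t (Suc k) - t k) * (t (Suc k) + t k) \<le> \<rho> * (t (Suc k) + t k)" .
  then show ?thesis using a by (simp add: mult_le_cancel_right)
qed

lemma KKT: "A *v xs = b" "gf xs + transpose A *v ls = 0"
  using lim_KKT by (auto simp: KKT_set_def)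

lemma Psi_tangent: "Psi y \<ge> Psi z + (gf z + transpose A *v ls) \<bullet> (y - z)"
proof -
  have "f y \<ge> f z + gf z \<bullet> (y - z)" by (rule tangent_ineq[OF f_convex f_grad])
  moreover have "ls \<bullet> (A *v y - b) - ls \<bullet> (A *v z - b) = (transpose A *v ls) \<bullet> (y - z)"
    by (simp add: adj2 matrix_vector_mult_diff_distrib inner_diff_right inner_diff_left inner_commute)
  ultimately show ?thesis unfolding Psi_def by (simp add: inner_add_left)
qed

lemma Psi_descent: "Psi (z + h) \<le> Psi z + (gf z + transpose A *v ls) \<bullet> h + L / 2 * (norm h)\<^sup>2"
proof -
  have "f (z + h) \<le> f z + gf z \<bullet> h + L / 2 * (norm h)\<^sup>2" by (rule descent_ineq[OF f_grad grad_lip])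
  moreover have "ls \<bullet> (A *v (z + h) - b) - ls \<bullet> (A *v z - b) = (transpose A *v ls) \<bullet> h"
    by (simp add: adj2 matrix_vector_right_distrib inner_add_right inner_diff_right inner_commute)
  ultimately show ?thesis unfolding Psi_def by (simp add: inner_add_left)
qed

lemma Psi_xs: "Psi xs = 0" by (simp add: Psi_def KKT)

lemma Psi_nonneg: "Psi y \<ge> 0"
  using Psi_tangent[where y=y and z=xs] KKT(2) Psi_xs by (metis add.left_neutral inner_zero_left)

lemma grad_Psi_bound: "(norm (gf y - gf xs))\<^sup>2 \<le> 2 * L * Psi y"
proof -
  have g: "gf y + transpose A *v ls = gf y - gf xs" using KKT(2) by (simp add: eq_neg_iff_add_eq_0 algebra_simps)
  define g' where "g' = gf y - gf xs"
  define h where "h = (- (1/L)) *\<^sub>R g'"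
  have "0 \<le> Psi (y + h)" by (rule Psi_nonneg)
  also have "\<dots> \<le> Psi y + g' \<bullet> h + L / 2 * (norm h)\<^sup>2"
    using Psi_descent[where z=y and h=h] g unfolding g'_def by simp
  finally have 1: "0 \<le> Psi y + g' \<bullet> h + L / 2 * (norm h)\<^sup>2" .
  have 2: "g' \<bullet> h + L / 2 * (norm h)\<^sup>2 = - (norm g')\<^sup>2 / (2 * L)"
    using L_pos unfolding h_def
    apply (simp add: power2_norm_eq_inner inner_commute power2_eq_square field_simps)
    apply (metis power2_norm_eq_inner power2_eq_square)
    done
  from 1 2 have "(norm g')\<^sup>2 / (2 * L) \<le> Psi y" by linarith
  then show ?thesis using L_pos unfolding g'_def by (simp add: field_simps)
qed

lemma ck_eq: "c_k t \<eta> k = \<sigma> * t (Suc k)" by (simp add: c_k_def \<sigma>_def)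
lemma ak_eq: "alpha_k t \<eta> k = \<sigma> * t (Suc k) - 1"
  using eta_pos by (simp add: alpha_k_def \<sigma>_def field_simps)

lemma l_step': assumes "k \<ge> 1"
  shows "l (Suc k) = extrap t l k + \<delta> *\<^sub>R (A *v w k - b)"
proof -
  have "c_k t \<eta> k *\<^sub>R (A *v x (Suc k)) - (alpha_k t \<eta> k *\<^sub>R (A *v x k) + b) = A *v w k - b"
    unfolding w_def ck_eq ak_eq
    by (simp add: matrix_vector_right_distrib matrix_vector_mult_diff_distrib matrix_vector_mult_scaleR algebra_simps)
  then show ?thesis using l_step[OF assms] by simp
qed

lemma opt_eq: assumes k: "k \<ge> 1"
  shows "gf (extrap t x k) + \<beta> *\<^sub>R (transpose A *v (A *v x (Suc k) - b))
     + (1/\<gamma>) *\<^sub>R (x (Suc k) - extrap t x k) + transpose A *v mu k = 0"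
proof -
  define c where "c = c_k t \<eta> k"
  define \<alpha> where "\<alpha> = alpha_k t \<eta> k"
  define p where "p = c *\<^sub>R extrap t l k - \<alpha> *\<^sub>R l k"
  define r where "r = \<alpha> *\<^sub>R (A *v x k) + b"
  have q: "gf (extrap t x k) + \<beta> *\<^sub>R (transpose A *v (A *v x (Suc k) - b)) + (1/\<gamma>) *\<^sub>R (x (Suc k) - extrap t x k) + transpose A *v p
     + (\<delta> * c) *\<^sub>R (transpose A *v (c *\<^sub>R (A *v x (Suc k)) - r)) = 0"
    apply (rule quad_opt[where \<phi> = "subproblem_obj gf A b t \<eta> \<gamma> \<delta> \<beta> x l k"])
     apply (rule x_step[OF k])
    apply (simp add: subproblem_obj_def Let_def p_def r_def c_def \<alpha>_def fun_eq_iff)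
    done
  have ls: "l (Suc k) = extrap t l k + \<delta> *\<^sub>R (c *\<^sub>R (A *v x (Suc k)) - r)"
    using l_step[OF k] unfolding c_def r_def \<alpha>_def .
  have "p + (\<delta> * c) *\<^sub>R (c *\<^sub>R (A *v x (Suc k)) - r) = mu k"
    unfolding p_def mu_def ls c_def \<alpha>_def ck_eq ak_eq by (simp add: algebra_simps)
  then have "transpose A *v p + (\<delta> * c) *\<^sub>R (transpose A *v (c *\<^sub>R (A *v x (Suc k)) - r)) = transpose A *v mu k"
    by (metis matrix_vector_mult_scaleR matrix_vector_right_distrib)
  with q show ?thesis by (simp add: add.assoc)
qed

lemma lin_comb:
  fixes c d P1 P2 i1 i2 iw Q :: real
  shows "c * P2 \<le> c * (P1 + i1 + Q) \<Longrightarrow> d * P2 \<le> d * (i2 + Q) \<Longrightarrow> c * i1 + d * i2 = d * iw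
    \<Longrightarrow> (c + d) * P2 \<le> c * P1 + d * iw + (c + d) * Q"
  by (simp add: algebra_simps)

lemma arithV: fixes c p n1 n2 :: real
  shows "(c - 1) * (2 * p) \<le> (c - 1) * (n1 + n2) \<Longrightarrow> - ((1 - c) * p + c * n2) \<le> - (c + 1) / 2 * n2 + (c - 1) / 2 * n1"
  by (simp add: field_simps)

lemma arithV2: fixes B S T P n1 n2 :: real
  shows "B * S * T * (- P) \<le> B * S * T * (- (S * T + 1) / 2 * n2 + (S * T - 1) / 2 * n1) \<Longrightarrow>
    - (S * T * B * P) \<le> - (B * S * T * (S * T + 1) / 2 * n2) + B * S * T / 2 * (S * T - 1) * n1"
  by (simp add: field_simps)

lemma arithI: fixes g S T iw Q n D dx :: real
  shows "g \<noteq> 0 \<Longrightarrow> (1/g) * (S * T * iw - Q / 2 * n - D / 2 * dx) = S * T / g * iw - Q / (2 * g) * n - D / (2 * g) * dx"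
  by (simp add: field_simps)

lemma arithII: fixes g S T im Q n D dl :: real
  shows "g \<noteq> 0 \<Longrightarrow> (1/g) * (S * T * (g * im) - Q / 2 * n - D / 2 * dl) = S * T * im - (1/g) * (Q / 2 * n) - D / (2 * g) * dl"
  by (simp add: field_simps)

lemma arithE: fixes Y1 Y2 B1 B2 g d P1 P2 D1 D2 :: real
  shows "Y2 + B2 + (1/g) * P2 + (1/d) * D2 = (Y1 + B1 + (1/g) * P1 + (1/d) * D1) + (Y2 - Y1) + (B2 - B1) + (1/g) * (P2 - P1) + (1/d) * (D2 - D1)"
  by (simp add: diff_divide_distrib algebra_simps)

lemma neg3: "(aa::real) = - (bb * XX + cc * YY + ZZ) \<Longrightarrow> YY = YY' \<Longrightarrow> aa = - bb * XX - cc * YY' - ZZ"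
  by (simp add: algebra_simps)

lemma final_arith:
  fixes E1 E2 Y2 Y1 B2 B1 GP GD Z1 IQ IW IM Qc NX DX DL Bq R1 R2 :: real
  assumes "E2 = E1 + (Y2 - Y1) + (B2 - B1) + GP + GD"
    "Y2 \<le> Z1 - IQ - IW - IM + Qc"
    "GP = IW - NX - DX"
    "GD \<le> IM - DL"
    "- IQ \<le> - B2 + Bq"
    "Z1 - Y1 \<le> - R1"
    "Bq - B1 \<le> - R2"
    "Qc \<le> NX"
  shows "E2 \<le> E1 - R1 - R2 - DX - DL"
  using assms by linarith

definition "E k = \<sigma>\<^sup>2 * (t k)\<^sup>2 * Psi (x k) + \<beta> * \<sigma> * t k * (\<sigma> * t k + 1) / 2 * (norm (A *v x k - b))\<^sup>2
  + (1/\<gamma>) * ((1/2) * (norm (x (k-1) + (\<sigma> * t k) *\<^sub>R (x k - x (k-1)) - xs))\<^sup>2 + ((\<sigma>-1)/2) * (norm (x (k-1) - xs))\<^sup>2)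
  + (1/\<delta>) * ((1/2) * (norm (l (k-1) + (\<sigma> * t k) *\<^sub>R (l k - l (k-1)) - ls))\<^sup>2 + ((\<sigma>-1)/2) * (norm (l (k-1) - ls))\<^sup>2)"

lemma step_ineq: assumes k: "k \<ge> 1"
  shows "E (Suc k) \<le> E k - \<sigma> * (1 - \<sigma> * \<rho>) * t (Suc k) * Psi (x k) - \<beta> * \<sigma> * t k / 2 * (norm (A *v x k - b))\<^sup>2
     - (\<sigma>-1) * \<sigma> * (2 * t k - 1) / (2 * \<gamma>) * (norm (x k - x (k-1)))\<^sup>2
     - (\<sigma>-1) * \<sigma> * (2 * t k - 1) / (2 * \<delta>) * (norm (l k - l (k-1)))\<^sup>2"
proof -
  define T where "T = t (Suc k)"
  define s where "s = t k"
  define \<theta> where "\<theta> = (s - 1) / T"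
  have s1: "s \<ge> 1" using t_ge1 k unfolding s_def by auto
  have T1: "T \<ge> 1" using t_ge1 k unfolding T_def by auto
  have sT: "s \<le> T" using t_mono k unfolding s_def T_def by auto
  have sth: "s = \<theta> * T + 1" using T1 unfolding \<theta>_def by simp
  have gr: "T\<^sup>2 - s\<^sup>2 \<le> \<rho> * T" using t_growth[OF k] unfolding T_def s_def .
  have sig: "\<sigma> > 1" "\<sigma> * \<eta> = 1" using sigma_gt1 sigma_eta by auto
  define xb where "xb = extrap t x k"
  define lb where "lb = extrap t l k"
  have xb: "xb = x k + \<theta> *\<^sub>R (x k - x (k-1))" unfolding xb_def extrap_def \<theta>_def s_def T_def ..
  have lb: "lb = l k + \<theta> *\<^sub>R (l k - l (k-1))" unfolding lb_def extrap_def \<theta>_def s_def T_def ..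
  define ex where "ex = x (Suc k) - xb"
  define q1 where "q1 = A *v x k - b"
  define q2 where "q2 = A *v x (Suc k) - b"
  define aw where "aw = A *v w k - b"
  define g' where "g' = gf xb + transpose A *v ls"
  define P1 where "P1 = (1/2) * (norm (x (k-1) + (\<sigma> * s) *\<^sub>R (x k - x (k-1)) - xs))\<^sup>2 + ((\<sigma>-1)/2) * (norm (x (k-1) - xs))\<^sup>2"
  define P2 where "P2 = (1/2) * (norm (w k - xs))\<^sup>2 + ((\<sigma>-1)/2) * (norm (x k - xs))\<^sup>2"
  define D1 where "D1 = (1/2) * (norm (l (k-1) + (\<sigma> * s) *\<^sub>R (l k - l (k-1)) - ls))\<^sup>2 + ((\<sigma>-1)/2) * (norm (l (k-1) - ls))\<^sup>2"
  define D2 where "D2 = (1/2) * (norm (mu k - ls))\<^sup>2 + ((\<sigma>-1)/2) * (norm (l k - ls))\<^sup>2"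
  define dx where "dx = (norm (x k - x (k-1)))\<^sup>2"
  define dl where "dl = (norm (l k - l (k-1)))\<^sup>2"
  have E1: "E k = \<sigma>\<^sup>2 * s\<^sup>2 * Psi (x k) + \<beta> * \<sigma> * s * (\<sigma> * s + 1) / 2 * (norm q1)\<^sup>2 + (1/\<gamma>) * P1 + (1/\<delta>) * D1"
    unfolding E_def s_def q1_def P1_def D1_def ..
  have E2: "E (Suc k) = \<sigma>\<^sup>2 * T\<^sup>2 * Psi (x (Suc k)) + \<beta> * \<sigma> * T * (\<sigma> * T + 1) / 2 * (norm q2)\<^sup>2 + (1/\<gamma>) * P2 + (1/\<delta>) * D2"
    unfolding E_def T_def q2_def P2_def D2_def w_def mu_def by simp
  have I: "P2 - P1 = \<sigma> * T * ((w k - xs) \<bullet> ex) - \<sigma>\<^sup>2 * T\<^sup>2 / 2 * (norm ex)\<^sup>2 - (\<sigma>-1) * \<sigma> * (2 * s - 1) / 2 * dx"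
    unfolding P1_def P2_def w_def ex_def xb dx_def T_def[symmetric]
    using inert_id[where zb="x k" and za="x (k-1)" and zc="x (Suc k)" and zs=xs and \<sigma>=\<sigma>, OF sth] by (simp add: norm_minus_commute)
  have II: "D2 - D1 = \<sigma> * T * ((mu k - ls) \<bullet> (l (Suc k) - lb)) - \<sigma>\<^sup>2 * T\<^sup>2 / 2 * (norm (l (Suc k) - lb))\<^sup>2 - (\<sigma>-1) * \<sigma> * (2 * s - 1) / 2 * dl"
    unfolding D1_def D2_def mu_def lb dl_def T_def[symmetric]
    using inert_id[where zb="l k" and za="l (k-1)" and zc="l (Suc k)" and zs=ls and \<sigma>=\<sigma>, OF sth] by (simp add: norm_minus_commute)
  have el: "l (Suc k) - lb = \<delta> *\<^sub>R aw" using l_step'[OF k] unfolding lb_def aw_def by simp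

  have X2: "x (Suc k) = xb + ex" unfolding ex_def by simp
  have a: "Psi (x (Suc k)) \<le> Psi (x k) + g' \<bullet> (x (Suc k) - x k) + L / 2 * (norm ex)\<^sup>2"
  proof -
    have "Psi (x (Suc k)) \<le> Psi xb + g' \<bullet> ex + L / 2 * (norm ex)\<^sup>2"
      using Psi_descent[where z=xb and h=ex] X2 unfolding g'_def by simp
    moreover have "Psi (x k) \<ge> Psi xb + g' \<bullet> (x k - xb)"
      using Psi_tangent[where y="x k" and z=xb] unfolding g'_def by simp
    moreover have "g' \<bullet> (x (Suc k) - x k) = g' \<bullet> ex - g' \<bullet> (x k - xb)"
      unfolding X2 by (simp add: inner_diff_right inner_add_right)
    ultimately show ?thesis by linarith
  qed
  have bb: "Psi (x (Suc k)) \<le> g' \<bullet> (x (Suc k) - xs) + L / 2 * (norm ex)\<^sup>2"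
  proof -
    have "Psi (x (Suc k)) \<le> Psi xb + g' \<bullet> ex + L / 2 * (norm ex)\<^sup>2"
      using Psi_descent[where z=xb and h=ex] X2 unfolding g'_def by simp
    moreover have "Psi xs \<ge> Psi xb + g' \<bullet> (xs - xb)"
      using Psi_tangent[where y=xs and z=xb] unfolding g'_def by simp
    moreover have "g' \<bullet> (x (Suc k) - xs) = g' \<bullet> ex - g' \<bullet> (xs - xb)"
      unfolding X2 by (simp add: inner_diff_right inner_add_right)
    ultimately show ?thesis using Psi_xs by linarith
  qed
  have sT1: "\<sigma> * T \<ge> 1" using mult_mono[of 1 \<sigma> 1 T] sig T1 by simp
  have III: "\<sigma>\<^sup>2 * T\<^sup>2 * Psi (x (Suc k)) \<le> (\<sigma>\<^sup>2 * T\<^sup>2 - \<sigma> * T) * Psi (x k) + \<sigma> * T * (g' \<bullet> (w k - xs)) + \<sigma>\<^sup>2 * T\<^sup>2 * (L / 2 * (norm ex)\<^sup>2)"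
  proof -
    have w1: "\<sigma>\<^sup>2 * T\<^sup>2 - \<sigma> * T \<ge> 0"
      using mult_left_mono[OF sT1, of "\<sigma> * T"] sT1 by (simp add: power2_eq_square algebra_simps)
    have "(\<sigma>\<^sup>2 * T\<^sup>2 - \<sigma> * T) * Psi (x (Suc k)) \<le> (\<sigma>\<^sup>2 * T\<^sup>2 - \<sigma> * T) * (Psi (x k) + g' \<bullet> (x (Suc k) - x k) + L / 2 * (norm ex)\<^sup>2)"
      using mult_left_mono[OF a w1] .
    moreover have "\<sigma> * T * Psi (x (Suc k)) \<le> \<sigma> * T * (g' \<bullet> (x (Suc k) - xs) + L / 2 * (norm ex)\<^sup>2)"
      using mult_left_mono[OF bb] sT1 by simp
    moreover have "(\<sigma>\<^sup>2 * T\<^sup>2 - \<sigma> * T) * (g' \<bullet> (x (Suc k) - x k)) + \<sigma> * T * (g' \<bullet> (x (Suc k) - xs)) = \<sigma> * T * (g' \<bullet> (w k - xs))"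
      unfolding w_def T_def[symmetric] by (simp add: inner_simps power2_eq_square algebra_simps)
    ultimately have "((\<sigma>\<^sup>2 * T\<^sup>2 - \<sigma> * T) + \<sigma> * T) * Psi (x (Suc k)) \<le> (\<sigma>\<^sup>2 * T\<^sup>2 - \<sigma> * T) * Psi (x k) + \<sigma> * T * (g' \<bullet> (w k - xs)) + ((\<sigma>\<^sup>2 * T\<^sup>2 - \<sigma> * T) + \<sigma> * T) * (L / 2 * (norm ex)\<^sup>2)"
      by (rule lin_comb)
    moreover have "(\<sigma>\<^sup>2 * T\<^sup>2 - \<sigma> * T) + \<sigma> * T = \<sigma>\<^sup>2 * T\<^sup>2" by simp
    ultimately show ?thesis by simp
  qed
  have Axs: "A *v xs = b" by (rule KKT(1))
  have IV: "g' \<bullet> (w k - xs) = - \<beta> * (q2 \<bullet> aw) - (1/\<gamma>) * ((w k - xs) \<bullet> ex) - ((mu k - ls) \<bullet> aw)"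
  proof -
    have o0: "gf xb + (\<beta> *\<^sub>R (transpose A *v q2) + (1/\<gamma>) *\<^sub>R ex + transpose A *v mu k) = 0"
      using opt_eq[OF k] unfolding q2_def ex_def xb_def by (simp only: add.assoc)
    then have o: "gf xb = - (\<beta> *\<^sub>R (transpose A *v q2) + (1/\<gamma>) *\<^sub>R ex + transpose A *v mu k)"
      by (simp only: eq_neg_iff_add_eq_0)
    have Aw: "A *v (w k - xs) = aw" unfolding aw_def by (simp add: matrix_vector_mult_diff_distrib Axs)
    have "g' = - (\<beta> *\<^sub>R (transpose A *v q2) + (1/\<gamma>) *\<^sub>R ex + transpose A *v (mu k - ls))"
      unfolding g'_def o by (simp add: matrix_vector_mult_diff_distrib algebra_simps)
    then have "g' \<bullet> (w k - xs) = - (\<beta> * (q2 \<bullet> (A *v (w k - xs))) + (1/\<gamma>) * (ex \<bullet> (w k - xs)) + (mu k - ls) \<bullet> (A *v (w k - xs)))"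
      by (simp only: inner_minus_left inner_add_left inner_scaleR_left adj3)
    then have "g' \<bullet> (w k - xs) = - (\<beta> * (q2 \<bullet> aw) + (1/\<gamma>) * (ex \<bullet> (w k - xs)) + (mu k - ls) \<bullet> aw)"
      by (simp only: Aw)
    moreover have "ex \<bullet> (w k - xs) = (w k - xs) \<bullet> ex" by (rule inner_commute)
    ultimately show ?thesis by (rule neg3)
  qed
  have V': "- (\<sigma> * T * \<beta> * (q2 \<bullet> aw)) \<le> - (\<beta> * \<sigma> * T * (\<sigma> * T + 1) / 2 * (norm q2)\<^sup>2) + \<beta> * \<sigma> * T / 2 * (\<sigma> * T - 1) * (norm q1)\<^sup>2"
  proof -
    have aw': "aw = q1 + (\<sigma> * T) *\<^sub>R (q2 - q1)"
      unfolding aw_def q1_def q2_def w_def T_def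
      by (simp add: matrix_vector_right_distrib matrix_vector_mult_diff_distrib matrix_vector_mult_scaleR algebra_simps)
    have i: "q2 \<bullet> aw = (1 - \<sigma> * T) * (q2 \<bullet> q1) + \<sigma> * T * (norm q2)\<^sup>2"
      unfolding aw' inner_add_right inner_scaleR_right inner_diff_right power2_norm_eq_inner
      by (simp add: inner_commute[of q1 q2] algebra_simps)
    have cs: "2 * (q2 \<bullet> q1) \<le> (norm q1)\<^sup>2 + (norm q2)\<^sup>2"
    proof -
      have "0 \<le> (norm (q2 - q1))\<^sup>2" by simp
      then show ?thesis unfolding power2_norm_eq_inner inner_diff_left inner_diff_right
        by (simp add: inner_commute[of q1 q2])
    qed
    have "(\<sigma> * T - 1) * (2 * (q2 \<bullet> q1)) \<le> (\<sigma> * T - 1) * ((norm q1)\<^sup>2 + (norm q2)\<^sup>2)"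
      using mult_left_mono[OF cs] sT1 by simp
    then have nq: "- (q2 \<bullet> aw) \<le> - (\<sigma> * T + 1) / 2 * (norm q2)\<^sup>2 + (\<sigma> * T - 1) / 2 * (norm q1)\<^sup>2"
      unfolding i by (rule arithV)
    have "\<beta> * \<sigma> * T \<ge> 0" by (intro mult_nonneg_nonneg) (use beta T1 sig in auto)
    from mult_left_mono[OF nq this] show ?thesis by (rule arithV2)
  qed
  have VI: "(mu k - ls) \<bullet> (l (Suc k) - lb) = \<delta> * ((mu k - ls) \<bullet> aw)" unfolding el by simp
  have psi1: "Psi (x k) \<ge> 0" by (rule Psi_nonneg)
  have c1: "(\<sigma>\<^sup>2 * T\<^sup>2 - \<sigma> * T) * Psi (x k) \<le> (\<sigma>\<^sup>2 * s\<^sup>2 - \<sigma> * (1 - \<sigma> * \<rho>) * T) * Psi (x k)"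
  proof (rule mult_right_mono[OF _ psi1])
    have "\<sigma>\<^sup>2 * (T\<^sup>2 - s\<^sup>2) \<le> \<sigma>\<^sup>2 * (\<rho> * T)" using gr by (simp add: mult_left_mono)
    then show "\<sigma>\<^sup>2 * T\<^sup>2 - \<sigma> * T \<le> \<sigma>\<^sup>2 * s\<^sup>2 - \<sigma> * (1 - \<sigma> * \<rho>) * T"
      by (simp add: algebra_simps power2_eq_square)
  qed
  have c2: "\<beta> * \<sigma> * T / 2 * (\<sigma> * T - 1) * (norm q1)\<^sup>2 \<le> (\<beta> * \<sigma> * s * (\<sigma> * s + 1) / 2 - \<beta> * \<sigma> * s / 2) * (norm q1)\<^sup>2"
  proof (rule mult_right_mono)
    have sr: "\<sigma> * \<rho> \<le> 1" using sig eta rho by (simp add: \<sigma>_def)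
    have "\<sigma>\<^sup>2 * (T\<^sup>2 - s\<^sup>2) \<le> \<sigma>\<^sup>2 * (\<rho> * T)" using gr by (simp add: mult_left_mono)
    also have "\<dots> = \<sigma> * T * (\<sigma> * \<rho>)" by (simp add: power2_eq_square)
    also have "\<dots> \<le> \<sigma> * T" using sr sig T1 by (simp add: mult_left_le)
    finally have "\<sigma> * T * (\<sigma> * T - 1) \<le> \<sigma> * s * (\<sigma> * s + 1) - \<sigma> * s"
      by (simp add: algebra_simps power2_eq_square)
    from mult_left_mono[OF this, of "\<beta> / 2"] beta
    show "\<beta> * \<sigma> * T / 2 * (\<sigma> * T - 1) \<le> \<beta> * \<sigma> * s * (\<sigma> * s + 1) / 2 - \<beta> * \<sigma> * s / 2"
      by (simp add: algebra_simps)
  qed simp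
  have c3: "\<sigma>\<^sup>2 * T\<^sup>2 * (L / 2 * (norm ex)\<^sup>2) \<le> \<sigma>\<^sup>2 * T\<^sup>2 / (2 * \<gamma>) * (norm ex)\<^sup>2"
  proof -
    have "L \<le> 1 / \<gamma>" using gamma L_pos by (simp add: field_simps)
    then have "L / 2 * (norm ex)\<^sup>2 \<le> 1 / (2 * \<gamma>) * (norm ex)\<^sup>2"
      by (intro mult_right_mono) auto
    from mult_left_mono[OF this, of "\<sigma>\<^sup>2 * T\<^sup>2"] show ?thesis by simp
  qed
  have nel: "\<sigma>\<^sup>2 * T\<^sup>2 / 2 * (norm (l (Suc k) - lb))\<^sup>2 \<ge> 0" by simp
  have I': "(1/\<gamma>) * (P2 - P1) = \<sigma> * T / \<gamma> * ((w k - xs) \<bullet> ex) - \<sigma>\<^sup>2 * T\<^sup>2 / (2 * \<gamma>) * (norm ex)\<^sup>2 - (\<sigma>-1) * \<sigma> * (2 * s - 1) / (2 * \<gamma>) * dx"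
    unfolding I by (rule arithI) (use gamma in simp)
  have II': "(1/\<delta>) * (D2 - D1) \<le> \<sigma> * T * ((mu k - ls) \<bullet> aw) - (\<sigma>-1) * \<sigma> * (2 * s - 1) / (2 * \<delta>) * dl"
  proof -
    have "(1/\<delta>) * (D2 - D1) = \<sigma> * T * ((mu k - ls) \<bullet> aw) - (1/\<delta>) * (\<sigma>\<^sup>2 * T\<^sup>2 / 2 * (norm (l (Suc k) - lb))\<^sup>2) - (\<sigma>-1) * \<sigma> * (2 * s - 1) / (2 * \<delta>) * dl"
      unfolding II VI by (rule arithII) (use delta in simp)
    moreover have "(1/\<delta>) * (\<sigma>\<^sup>2 * T\<^sup>2 / 2 * (norm (l (Suc k) - lb))\<^sup>2) \<ge> 0" using delta nel by simp
    ultimately show ?thesis by linarith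
  qed
  have III': "\<sigma>\<^sup>2 * T\<^sup>2 * Psi (x (Suc k)) \<le> (\<sigma>\<^sup>2 * T\<^sup>2 - \<sigma> * T) * Psi (x k) - (\<sigma> * T * \<beta> * (q2 \<bullet> aw))
      - (\<sigma> * T / \<gamma> * ((w k - xs) \<bullet> ex)) - (\<sigma> * T * ((mu k - ls) \<bullet> aw)) + \<sigma>\<^sup>2 * T\<^sup>2 * (L / 2 * (norm ex)\<^sup>2)"
  proof -
    have "\<sigma> * T * (g' \<bullet> (w k - xs)) = - (\<sigma> * T * \<beta> * (q2 \<bullet> aw)) - (\<sigma> * T / \<gamma> * ((w k - xs) \<bullet> ex)) - (\<sigma> * T * ((mu k - ls) \<bullet> aw))"
      unfolding IV by (simp add: algebra_simps)
    then show ?thesis using III by linarith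
  qed
  have c1': "(\<sigma>\<^sup>2 * T\<^sup>2 - \<sigma> * T) * Psi (x k) - \<sigma>\<^sup>2 * s\<^sup>2 * Psi (x k) \<le> - (\<sigma> * (1 - \<sigma> * \<rho>) * T * Psi (x k))"
    using c1 by (simp add: algebra_simps)
  have c2': "\<beta> * \<sigma> * T / 2 * (\<sigma> * T - 1) * (norm q1)\<^sup>2 - \<beta> * \<sigma> * s * (\<sigma> * s + 1) / 2 * (norm q1)\<^sup>2 \<le> - (\<beta> * \<sigma> * s / 2 * (norm q1)\<^sup>2)"
    using c2 by (simp add: algebra_simps)
  have E2': "E (Suc k) = E k + (\<sigma>\<^sup>2 * T\<^sup>2 * Psi (x (Suc k)) - \<sigma>\<^sup>2 * s\<^sup>2 * Psi (x k))
     + (\<beta> * \<sigma> * T * (\<sigma> * T + 1) / 2 * (norm q2)\<^sup>2 - \<beta> * \<sigma> * s * (\<sigma> * s + 1) / 2 * (norm q1)\<^sup>2)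
     + (1/\<gamma>) * (P2 - P1) + (1/\<delta>) * (D2 - D1)"
    unfolding E1 E2 by (rule arithE)
  have "E (Suc k) \<le> E k - \<sigma> * (1 - \<sigma> * \<rho>) * T * Psi (x k) - \<beta> * \<sigma> * s / 2 * (norm q1)\<^sup>2
     - (\<sigma>-1) * \<sigma> * (2 * s - 1) / (2 * \<gamma>) * dx - (\<sigma>-1) * \<sigma> * (2 * s - 1) / (2 * \<delta>) * dl"
    using final_arith[OF E2' III' I' II' V' c1' c2' c3] by simp
  then show ?thesis unfolding T_def s_def q1_def dx_def dl_def .
qed
end



lemma limit_zero_weighted:
  fixes Z a :: "nat \<Rightarrow> real"
  assumes lim: "Z \<longlonglongrightarrow> z" and a: "\<And>n. 0 \<le> a n" and ns: "\<not> summable a"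
    and s: "summable (\<lambda>n. a n * Z n)" and Z: "\<And>n. 0 \<le> Z n"
  shows "z = 0"
proof (rule ccontr)
  assume "z \<noteq> 0"
  moreover have "z \<ge> 0" using LIMSEQ_le_const[OF lim] Z by blast
  ultimately have zp: "z > 0" by simp
  then have "eventually (\<lambda>n. Z n > z / 2) sequentially"
    using lim by (intro order_tendstoD(1)) auto
  then have "eventually (\<lambda>n. norm (a n) \<le> (2 / z) * (a n * Z n)) sequentially"
  proof eventually_elim
    case (elim n)
    have "a n * (z / 2) \<le> a n * Z n" using elim a[of n] by (intro mult_left_mono) auto
    then show ?case using zp a[of n] by (simp add: field_simps)
  qed
  then have "summable a" by (rule summable_comparison_test_ev) (use s in \<open>rule summable_mult\<close>)
  with ns show False by simp
qed

lemma quasi_fejer_zero: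
  fixes X a \<beta> :: "nat \<Rightarrow> real"
  assumes X: "\<And>n. 0 \<le> X n" and rec: "\<And>n. X (Suc n) \<le> X n + \<beta> n"
    and b: "\<And>n. 0 \<le> \<beta> n" "summable \<beta>"
    and a: "\<And>n. 0 \<le> a n" and ns: "\<not> summable a" and s: "summable (\<lambda>n. a n * X n)"
  shows "X \<longlonglongrightarrow> 0"
proof -
  define T where "T n = suminf \<beta> - (\<Sum>i<n. \<beta> i)" for n
  define Y where "Y n = X n + T n" for n
  have T0: "T n \<ge> 0" for n unfolding T_def using sum_le_suminf[OF b(2), of "{..<n}"] b(1) by auto
  have "decseq Y"
  proof (rule decseq_SucI)
    fix n show "Y (Suc n) \<le> Y n" unfolding Y_def T_def using rec[of n] by simp
  qed
  moreover have "\<forall>i. 0 \<le> Y i" using X T0 unfolding Y_def by (simp add: add_nonneg_nonneg)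
  ultimately obtain L where YL: "Y \<longlonglongrightarrow> L" by (rule decseq_convergent)
  have T: "T \<longlonglongrightarrow> 0" unfolding T_def
    using tendsto_diff[OF tendsto_const[of "suminf \<beta>"] summable_LIMSEQ[OF b(2)]] by simp
  have XL: "X \<longlonglongrightarrow> L" using tendsto_diff[OF YL T] unfolding Y_def by simp
  have "L = 0" by (rule limit_zero_weighted[OF XL a ns s X])
  with XL show ?thesis by simp
qed

lemma rec_lemma:
  fixes h a bb :: "nat \<Rightarrow> real" and c :: real
  assumes h: "\<And>n. 0 \<le> h n" and a: "\<And>n. 0 < a n" "\<And>n. a n \<le> 1" and c: "0 < c" "c \<le> 1"
    and rec: "\<And>n. h (Suc n) \<le> (1 - c * a n) * h n + bb n" and bb: "\<And>n. 0 \<le> bb n"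
    and sb: "summable (\<lambda>n. (bb n)\<^sup>2 / a n)" and ns: "\<not> summable a"
  shows "h \<longlonglongrightarrow> 0" "summable (\<lambda>n. a n * (h n)\<^sup>2)"
proof -
  have key: "(h (Suc n))\<^sup>2 \<le> (h n)\<^sup>2 - c / 2 * (a n * (h n)\<^sup>2) + 3 / c * ((bb n)\<^sup>2 / a n)" for n
  proof -
    have ca: "0 < c * a n" "c * a n \<le> 1" using a[of n] c mult_mono[of c 1 "a n" 1] by auto
    define u where "u = (1 - c * a n) * h n"
    have u0: "0 \<le> u" using ca h[of n] unfolding u_def by simp
    have f1: "(h (Suc n))\<^sup>2 \<le> u\<^sup>2 + 2 * u * bb n + (bb n)\<^sup>2"
    proof -
      have "(h (Suc n))\<^sup>2 \<le> (u + bb n)\<^sup>2"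
        using rec[of n] h[of "Suc n"] unfolding u_def by (intro power_mono) auto
      then show ?thesis by (simp add: power2_eq_square algebra_simps)
    qed
    have f2: "u\<^sup>2 \<le> (1 - c * a n) * (h n)\<^sup>2"
    proof -
      have "u\<^sup>2 = (1 - c * a n) * ((1 - c * a n) * (h n)\<^sup>2)" unfolding u_def by (simp add: power2_eq_square)
      also have "\<dots> \<le> (1 - c * a n) * (h n)\<^sup>2"
        using ca by (intro mult_left_mono) (auto simp: mult_left_le_one_le)
      finally show ?thesis .
    qed
    have f3: "2 * u * bb n \<le> c * a n / 2 * (h n)\<^sup>2 + 2 / (c * a n) * (bb n)\<^sup>2"
    proof -
      have "2 * u * bb n \<le> 2 * h n * bb n"
        using ca h[of n] bb[of n] unfolding u_def by (intro mult_right_mono) (auto simp: mult_left_le_one_le)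
      also have "\<dots> \<le> c * a n / 2 * (h n)\<^sup>2 + 2 / (c * a n) * (bb n)\<^sup>2"
      proof -
        have "0 \<le> (c * a n / 2) * (h n - 2 / (c * a n) * bb n)\<^sup>2" using ca by simp
        also have "\<dots> = c * a n / 2 * (h n)\<^sup>2 + 2 / (c * a n) * (bb n)\<^sup>2 - 2 * h n * bb n"
          using ca a[of n] c by (simp add: power2_eq_square field_simps)
        finally show ?thesis by simp
      qed
      finally show ?thesis .
    qed
    have f4: "(bb n)\<^sup>2 \<le> 1 / (c * a n) * (bb n)\<^sup>2"
    proof -
      have "1 \<le> 1 / (c * a n)" using ca by (simp add: field_simps)
      from mult_right_mono[OF this zero_le_power2[of "bb n"]] show ?thesis by simp
    qed
    from f1 f2 f3 f4 have "(h (Suc n))\<^sup>2 \<le> (1 - c * a n) * (h n)\<^sup>2 + (c * a n / 2 * (h n)\<^sup>2 + 2 / (c * a n) * (bb n)\<^sup>2) + 1 / (c * a n) * (bb n)\<^sup>2"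
      by linarith
    also have "\<dots> = (h n)\<^sup>2 - c / 2 * (a n * (h n)\<^sup>2) + 3 / c * ((bb n)\<^sup>2 / a n)"
      using ca by (simp add: field_simps)
    finally show ?thesis .
  qed
  define B where "B = (h 0)\<^sup>2 + 3 / c * (\<Sum>n. (bb n)\<^sup>2 / a n)"
  have part: "(\<Sum>n<N. c / 2 * (a n * (h n)\<^sup>2)) + (h N)\<^sup>2 \<le> (h 0)\<^sup>2 + 3 / c * (\<Sum>n<N. (bb n)\<^sup>2 / a n)" for N
  proof (induction N)
    case 0 then show ?case by simp
  next
    case (Suc N)
    then show ?case using key[of N] by (simp add: algebra_simps)
  qed
  have sb0: "0 \<le> (bb n)\<^sup>2 / a n" for n using a[of n] by simp
  have part2: "(\<Sum>n<N. c / 2 * (a n * (h n)\<^sup>2)) \<le> B" for N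
  proof -
    have "(\<Sum>n<N. (bb n)\<^sup>2 / a n) \<le> (\<Sum>n. (bb n)\<^sup>2 / a n)"
      by (rule sum_le_suminf[OF sb]) (use sb0 in auto)
    then have "3 / c * (\<Sum>n<N. (bb n)\<^sup>2 / a n) \<le> 3 / c * (\<Sum>n. (bb n)\<^sup>2 / a n)"
      using c by (intro mult_left_mono) auto
    with part[of N] zero_le_power2[of "h N"] show ?thesis unfolding B_def by linarith
  qed
  have "summable (\<lambda>n. c / 2 * (a n * (h n)\<^sup>2))"
    by (rule summableI_nonneg_bounded[OF _ part2]) (use a c in \<open>simp add: less_imp_le\<close>)
  then have "summable (\<lambda>n. (2 / c) * (c / 2 * (a n * (h n)\<^sup>2)))" by (rule summable_mult)
  then show S: "summable (\<lambda>n. a n * (h n)\<^sup>2)" using c by simp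
  have "(\<lambda>n. (h n)\<^sup>2) \<longlonglongrightarrow> 0"
  proof (rule quasi_fejer_zero[where \<beta> = "\<lambda>n. 3 / c * ((bb n)\<^sup>2 / a n)" and a = a])
    show "(h (Suc n))\<^sup>2 \<le> (h n)\<^sup>2 + 3 / c * ((bb n)\<^sup>2 / a n)" for n
      using key[of n] a[of n] c h[of n] by (smt (verit) mult_nonneg_nonneg zero_le_power2 divide_nonneg_nonneg)
    show "0 \<le> 3 / c * ((bb n)\<^sup>2 / a n)" for n using c sb0[of n] by (intro mult_nonneg_nonneg) auto
    show "summable (\<lambda>n. 3 / c * ((bb n)\<^sup>2 / a n))" using sb by (rule summable_mult)
  qed (use a ns S in \<open>auto intro: less_imp_le\<close>)
  then have "(\<lambda>n. sqrt ((h n)\<^sup>2)) \<longlonglongrightarrow> sqrt 0" by (rule tendsto_real_sqrt)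
  then show "h \<longlonglongrightarrow> 0" using h by simp
qed




context aalm begin

lemma t_pos: "k \<ge> 1 \<Longrightarrow> t k > 0" using t_ge1[of k] by simp

lemma t_le_nat: "k \<ge> 1 \<Longrightarrow> t k \<le> real k"
proof (induction k rule: dec_induct)
  case base then show ?case using t_1 by simp
next
  case (step n) then show ?case using t_incr[of n] rho by simp
qed

lemma t2: "t (Suc (Suc k)) \<le> 2 * t (Suc k)"
  using t_incr[of "Suc k"] t_ge1[of "Suc k"] rho by simp

lemma t_mono': "t (Suc k) \<le> t (Suc (Suc k))" using t_mono[of "Suc k"] by simp

lemma not_summable_inv_t: "\<not> summable (\<lambda>n. 1 / t (Suc n))"
proof
  assume s: "summable (\<lambda>n. 1 / t (Suc n))"
  have "summable (\<lambda>n. inverse (real (Suc n)))"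
  proof (rule summable_comparison_test[OF _ s], intro exI allI impI)
    fix n :: nat
    have "t (Suc n) \<le> real (Suc n)" "t (Suc n) > 0" using t_le_nat[of "Suc n"] t_pos[of "Suc n"] by auto
    then show "norm (inverse (real (Suc n))) \<le> 1 / t (Suc n)"
      by (simp add: divide_simps)
  qed
  then have "summable (\<lambda>n. inverse (real n))" by (subst summable_Suc_iff[symmetric])
  then show False using not_summable_harmonic[where 'a=real] by simp
qed

lemma E_nonneg: assumes "k \<ge> 1" shows "E k \<ge> 0"
proof -
  have tk: "t k \<ge> 1" using t_ge1 assms by simp
  have "0 \<le> \<sigma>\<^sup>2 * (t k)\<^sup>2 * Psi (x k)" using Psi_nonneg by simp
  moreover have "0 \<le> \<beta> * \<sigma> * t k * (\<sigma> * t k + 1) / 2 * (norm (A *v x k - b))\<^sup>2"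
    using beta sigma_gt1 tk by simp
  moreover have "0 \<le> (1/\<gamma>) * ((1/2) * (norm (x (k-1) + (\<sigma> * t k) *\<^sub>R (x k - x (k-1)) - xs))\<^sup>2 + ((\<sigma>-1)/2) * (norm (x (k-1) - xs))\<^sup>2)"
    using gamma sigma_gt1 by simp
  moreover have "0 \<le> (1/\<delta>) * ((1/2) * (norm (l (k-1) + (\<sigma> * t k) *\<^sub>R (l k - l (k-1)) - ls))\<^sup>2 + ((\<sigma>-1)/2) * (norm (l (k-1) - ls))\<^sup>2)"
    using delta sigma_gt1 by simp
  ultimately show ?thesis unfolding E_def by linarith
qed

definition "s1 n = t (Suc (Suc n)) * Psi (x (Suc n))"
definition "s2 n = \<beta> * t (Suc n) * (norm (A *v x (Suc n) - b))\<^sup>2"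
definition "s3 n = t (Suc n) * (norm (x (Suc n) - x n))\<^sup>2"
definition "s4 n = t (Suc n) * (norm (l (Suc n) - l n))\<^sup>2"
definition "r n = \<sigma> * (1 - \<sigma> * \<rho>) * s1 n + \<sigma> / 2 * s2 n + (\<sigma>-1) * \<sigma> / (2 * \<gamma>) * s3 n + (\<sigma>-1) * \<sigma> / (2 * \<delta>) * s4 n"

lemma sr_lt1: "\<sigma> * \<rho> < 1" using eta rho eta_pos by (simp add: \<sigma>_def field_simps)

lemma s_nonneg: "s1 n \<ge> 0" "s2 n \<ge> 0" "s3 n \<ge> 0" "s4 n \<ge> 0"
  using t_pos[of "Suc n"] t_pos[of "Suc (Suc n)"] Psi_nonneg[of "x (Suc n)"] beta
  unfolding s1_def s2_def s3_def s4_def by auto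

lemma coef_pos: "\<sigma> * (1 - \<sigma> * \<rho>) > 0" "\<sigma> / 2 > 0" "(\<sigma>-1) * \<sigma> / (2 * \<gamma>) > 0" "(\<sigma>-1) * \<sigma> / (2 * \<delta>) > 0"
  using sigma_gt1 sr_lt1 gamma delta by auto

lemma E_dec: "E (Suc (Suc n)) \<le> E (Suc n) - r n"
proof -
  have st: "E (Suc (Suc n)) \<le> E (Suc n) - \<sigma> * (1 - \<sigma> * \<rho>) * t (Suc (Suc n)) * Psi (x (Suc n)) - \<beta> * \<sigma> * t (Suc n) / 2 * (norm (A *v x (Suc n) - b))\<^sup>2
     - (\<sigma>-1) * \<sigma> * (2 * t (Suc n) - 1) / (2 * \<gamma>) * (norm (x (Suc n) - x n))\<^sup>2
     - (\<sigma>-1) * \<sigma> * (2 * t (Suc n) - 1) / (2 * \<delta>) * (norm (l (Suc n) - l n))\<^sup>2"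
    using step_ineq[of "Suc n"] by simp
  have tt: "t (Suc n) \<le> 2 * t (Suc n) - 1" using t_ge1[of "Suc n"] by simp
  have p1: "\<sigma> * (1 - \<sigma> * \<rho>) * s1 n = \<sigma> * (1 - \<sigma> * \<rho>) * t (Suc (Suc n)) * Psi (x (Suc n))"
    unfolding s1_def by (simp add: mult.assoc)
  have p2: "\<sigma> / 2 * s2 n = \<beta> * \<sigma> * t (Suc n) / 2 * (norm (A *v x (Suc n) - b))\<^sup>2"
    unfolding s2_def by (simp add: mult_ac)
  have p3: "(\<sigma>-1) * \<sigma> / (2 * \<gamma>) * s3 n \<le> (\<sigma>-1) * \<sigma> * (2 * t (Suc n) - 1) / (2 * \<gamma>) * (norm (x (Suc n) - x n))\<^sup>2"
  proof -
    have "(\<sigma>-1) * \<sigma> / (2 * \<gamma>) * (t (Suc n) * (norm (x (Suc n) - x n))\<^sup>2) \<le> (\<sigma>-1) * \<sigma> / (2 * \<gamma>) * ((2 * t (Suc n) - 1) * (norm (x (Suc n) - x n))\<^sup>2)"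
      using coef_pos(3) tt by (intro mult_left_mono mult_right_mono) auto
    then show ?thesis unfolding s3_def by (simp add: mult_ac)
  qed
  have p4: "(\<sigma>-1) * \<sigma> / (2 * \<delta>) * s4 n \<le> (\<sigma>-1) * \<sigma> * (2 * t (Suc n) - 1) / (2 * \<delta>) * (norm (l (Suc n) - l n))\<^sup>2"
  proof -
    have "(\<sigma>-1) * \<sigma> / (2 * \<delta>) * (t (Suc n) * (norm (l (Suc n) - l n))\<^sup>2) \<le> (\<sigma>-1) * \<sigma> / (2 * \<delta>) * ((2 * t (Suc n) - 1) * (norm (l (Suc n) - l n))\<^sup>2)"
      using coef_pos(4) tt by (intro mult_left_mono mult_right_mono) auto
    then show ?thesis unfolding s4_def by (simp add: mult_ac)
  qed
  show ?thesis unfolding r_def using st p1 p2 p3 p4 by linarith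
qed

lemma r_terms: "0 \<le> \<sigma> * (1 - \<sigma> * \<rho>) * s1 n" "0 \<le> \<sigma> / 2 * s2 n" "0 \<le> (\<sigma>-1) * \<sigma> / (2 * \<gamma>) * s3 n"
    "0 \<le> (\<sigma>-1) * \<sigma> / (2 * \<delta>) * s4 n"
  apply (rule mult_nonneg_nonneg[OF less_imp_le[OF coef_pos(1)] s_nonneg(1)])
  apply (rule mult_nonneg_nonneg[OF less_imp_le[OF coef_pos(2)] s_nonneg(2)])
  apply (rule mult_nonneg_nonneg[OF less_imp_le[OF coef_pos(3)] s_nonneg(3)])
  apply (rule mult_nonneg_nonneg[OF less_imp_le[OF coef_pos(4)] s_nonneg(4)])
  done

lemma r_nonneg: "r n \<ge> 0"
  unfolding r_def using r_terms[of n] by linarith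

lemma E_le_E1: "E (Suc n) + (\<Sum>i<n. r i) \<le> E 1"
proof (induction n)
  case 0 then show ?case by simp
next
  case (Suc n) then show ?case using E_dec[of n] by simp
qed

lemma r_summable: "summable r"
proof (rule summableI_nonneg_bounded[OF r_nonneg])
  fix n show "(\<Sum>i<n. r i) \<le> E 1" using E_le_E1[of n] E_nonneg[of "Suc n"] by simp
qed

lemma s_summable: "summable s1" "summable s2" "summable s3" "summable s4"
proof -
  have le: "\<sigma> * (1 - \<sigma> * \<rho>) * s1 n \<le> r n" "\<sigma> / 2 * s2 n \<le> r n" "(\<sigma>-1) * \<sigma> / (2 * \<gamma>) * s3 n \<le> r n"
    "(\<sigma>-1) * \<sigma> / (2 * \<delta>) * s4 n \<le> r n" for n
    unfolding r_def using r_terms[of n] by linarith+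
  have gen: "summable u" if "\<And>n. 0 \<le> u n" "\<And>n. cc * u n \<le> r n" "cc > 0" for u and cc :: real
  proof -
    have "summable (\<lambda>n. (1/cc) * r n)" using r_summable by (rule summable_mult)
    then show ?thesis
    proof (rule summable_comparison_test[rotated], intro exI allI impI)
      fix n show "norm (u n) \<le> 1 / cc * r n" using that(1)[of n] that(2)[of n] that(3) by (simp add: field_simps)
    qed
  qed
  show "summable s1" by (rule gen[OF _ le(1) coef_pos(1)]) (use s_nonneg in auto)
  show "summable s2" by (rule gen[OF _ le(2) coef_pos(2)]) (use s_nonneg in auto)
  show "summable s3" by (rule gen[OF _ le(3) coef_pos(3)]) (use s_nonneg in auto)
  show "summable s4" by (rule gen[OF _ le(4) coef_pos(4)]) (use s_nonneg in auto)
qed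


definition "W k = \<sigma>\<^sup>2 * (t k)\<^sup>2 * Psi (x k) + \<beta> * \<sigma> * t k * (\<sigma> * t k + 1) / 2 * (norm (A *v x k - b))\<^sup>2
  + (\<sigma> * t k)\<^sup>2 / (2 * \<gamma>) * (norm (x k - x (k-1)))\<^sup>2 + (\<sigma> * t k)\<^sup>2 / (2 * \<delta>) * (norm (l k - l (k-1)))\<^sup>2"

definition "Rest k = (1/\<gamma>) * ((\<sigma>/2 - 1) * (norm (x (k-1) - xs))\<^sup>2 + (x (k-1) - xs) \<bullet> (x (k-1) + (\<sigma> * t k) *\<^sub>R (x k - x (k-1)) - xs))
  + (1/\<delta>) * ((\<sigma>/2 - 1) * (norm (l (k-1) - ls))\<^sup>2 + (l (k-1) - ls) \<bullet> (l (k-1) + (\<sigma> * t k) *\<^sub>R (l k - l (k-1)) - ls))"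

lemma split_id:
  fixes za zb zs :: "'a::real_inner"
  shows "(1/2) * (norm (za + c *\<^sub>R (zb - za) - zs))\<^sup>2 + ((\<sigma>-1)/2) * (norm (za - zs))\<^sup>2
    = c\<^sup>2 / 2 * (norm (zb - za))\<^sup>2 + ((\<sigma>/2 - 1) * (norm (za - zs))\<^sup>2 + (za - zs) \<bullet> (za + c *\<^sub>R (zb - za) - zs))"
proof -
  obtain p q where pq: "za = zs + p" "zb = zs + q" by (metis add.commute diff_add_cancel)
  show ?thesis unfolding pq power2_norm_eq_inner
    apply (simp add: inner_simps inner_commute algebra_simps power2_eq_square)
    apply (simp add: field_simps)
    done
qed

lemma arith_split: fixes a1 b1 g d P D Pr Dr cc :: real
  shows "P = cc / 2 * dx + Pr \<Longrightarrow> D = cc / 2 * dl + Dr \<Longrightarrow>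
   a1 + b1 + (1/g) * P + (1/d) * D = (a1 + b1 + cc / (2 * g) * dx + cc / (2 * d) * dl) + ((1/g) * Pr + (1/d) * Dr)"
  by (simp add: distrib_left)

lemma E_split: "E k = W k + Rest k"
  unfolding E_def W_def Rest_def
  by (rule arith_split[OF split_id split_id])

lemma E_ge_U: assumes "k \<ge> 1"
  shows "(1/\<gamma>) * ((1/2) * (norm (x (k-1) + (\<sigma> * t k) *\<^sub>R (x k - x (k-1)) - xs))\<^sup>2) \<le> E k"
    "(1/\<delta>) * ((1/2) * (norm (l (k-1) + (\<sigma> * t k) *\<^sub>R (l k - l (k-1)) - ls))\<^sup>2) \<le> E k"
proof -
  have tk: "t k \<ge> 1" using t_ge1 assms by simp
  have a: "0 \<le> \<sigma>\<^sup>2 * (t k)\<^sup>2 * Psi (x k)" using Psi_nonneg by simp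
  have b: "0 \<le> \<beta> * \<sigma> * t k * (\<sigma> * t k + 1) / 2 * (norm (A *v x k - b))\<^sup>2"
    using beta sigma_gt1 tk by simp
  have c: "(1/\<gamma>) * ((1/2) * (norm (x (k-1) + (\<sigma> * t k) *\<^sub>R (x k - x (k-1)) - xs))\<^sup>2) \<le> (1/\<gamma>) * ((1/2) * (norm (x (k-1) + (\<sigma> * t k) *\<^sub>R (x k - x (k-1)) - xs))\<^sup>2 + ((\<sigma>-1)/2) * (norm (x (k-1) - xs))\<^sup>2)"
    using gamma sigma_gt1 by (intro mult_left_mono) auto
  have d: "(1/\<delta>) * ((1/2) * (norm (l (k-1) + (\<sigma> * t k) *\<^sub>R (l k - l (k-1)) - ls))\<^sup>2) \<le> (1/\<delta>) * ((1/2) * (norm (l (k-1) + (\<sigma> * t k) *\<^sub>R (l k - l (k-1)) - ls))\<^sup>2 + ((\<sigma>-1)/2) * (norm (l (k-1) - ls))\<^sup>2)"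
    using delta sigma_gt1 by (intro mult_left_mono) auto
  have c0: "0 \<le> (1/\<gamma>) * ((1/2) * (norm (x (k-1) + (\<sigma> * t k) *\<^sub>R (x k - x (k-1)) - xs))\<^sup>2)" using gamma by simp
  have d0: "0 \<le> (1/\<delta>) * ((1/2) * (norm (l (k-1) + (\<sigma> * t k) *\<^sub>R (l k - l (k-1)) - ls))\<^sup>2)" using delta by simp
  show "(1/\<gamma>) * ((1/2) * (norm (x (k-1) + (\<sigma> * t k) *\<^sub>R (x k - x (k-1)) - xs))\<^sup>2) \<le> E k"
    unfolding E_def using a b c d d0 by linarith
  show "(1/\<delta>) * ((1/2) * (norm (l (k-1) + (\<sigma> * t k) *\<^sub>R (l k - l (k-1)) - ls))\<^sup>2) \<le> E k"
    unfolding E_def using a b c d c0 by linarith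
qed

lemma E_le1: "E (Suc n) \<le> E 1"
proof -
  have "0 \<le> sum r {..<n}" by (rule sum_nonneg) (use r_nonneg in auto)
  then show ?thesis using E_le_E1[of n] by linarith
qed

lemma inner_to_zero:
  fixes e U :: "nat \<Rightarrow> 'a::real_inner"
  assumes e: "e \<longlonglongrightarrow> 0" and U: "\<And>n. (norm (U n))\<^sup>2 \<le> M"
  shows "(\<lambda>n. e n \<bullet> U n) \<longlonglongrightarrow> 0"
proof (rule Lim_null_comparison)
  have "M \<ge> 0" using U[of 0] by (meson order_trans zero_le_power2)
  show "eventually (\<lambda>n. norm (e n \<bullet> U n) \<le> norm (e n) * sqrt M) sequentially"
  proof (rule always_eventually, rule allI)
    fix n
    have "norm (U n) \<le> sqrt M" using U[of n] by (simp add: real_le_rsqrt)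
    then have "norm (e n) * norm (U n) \<le> norm (e n) * sqrt M" by (simp add: mult_left_mono)
    then show "norm (e n \<bullet> U n) \<le> norm (e n) * sqrt M"
      using Cauchy_Schwarz_ineq2[of "e n" "U n"] by simp
  qed
  have "(\<lambda>n. norm (e n)) \<longlonglongrightarrow> 0" using tendsto_norm_zero[OF e] .
  then show "(\<lambda>n. norm (e n) * sqrt M) \<longlonglongrightarrow> 0" by (simp add: tendsto_mult_left_zero)
qed

lemma Rest_lim: "(\<lambda>n. Rest (Suc n)) \<longlonglongrightarrow> 0"
proof -
  have ex: "(\<lambda>n. x n - xs) \<longlonglongrightarrow> 0" using tendsto_diff[OF lim_x tendsto_const[of xs]] by simp
  have el: "(\<lambda>n. l n - ls) \<longlonglongrightarrow> 0" using tendsto_diff[OF lim_l tendsto_const[of ls]] by simp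
  have ex2: "(\<lambda>n. (norm (x n - xs))\<^sup>2) \<longlonglongrightarrow> 0" using tendsto_power[OF tendsto_norm_zero[OF ex], of 2] by simp
  have el2: "(\<lambda>n. (norm (l n - ls))\<^sup>2) \<longlonglongrightarrow> 0" using tendsto_power[OF tendsto_norm_zero[OF el], of 2] by simp
  have Ux: "(norm (x n + (\<sigma> * t (Suc n)) *\<^sub>R (x (Suc n) - x n) - xs))\<^sup>2 \<le> 2 * \<gamma> * E 1" for n
  proof -
    have "(norm (x n + (\<sigma> * t (Suc n)) *\<^sub>R (x (Suc n) - x n) - xs))\<^sup>2 \<le> 2 * \<gamma> * E (Suc n)"
      using E_ge_U(1)[of "Suc n"] gamma by (simp add: field_simps)
    also have "\<dots> \<le> 2 * \<gamma> * E 1" using E_le1[of n] gamma by (intro mult_left_mono) auto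
    finally show ?thesis .
  qed
  have Ul: "(norm (l n + (\<sigma> * t (Suc n)) *\<^sub>R (l (Suc n) - l n) - ls))\<^sup>2 \<le> 2 * \<delta> * E 1" for n
  proof -
    have "(norm (l n + (\<sigma> * t (Suc n)) *\<^sub>R (l (Suc n) - l n) - ls))\<^sup>2 \<le> 2 * \<delta> * E (Suc n)"
      using E_ge_U(2)[of "Suc n"] delta by (simp add: field_simps)
    also have "\<dots> \<le> 2 * \<delta> * E 1" using E_le1[of n] delta by (intro mult_left_mono) auto
    finally show ?thesis .
  qed
  have ix: "(\<lambda>n. (x n - xs) \<bullet> (x n + (\<sigma> * t (Suc n)) *\<^sub>R (x (Suc n) - x n) - xs)) \<longlonglongrightarrow> 0"
    by (rule inner_to_zero[OF ex Ux])
  have il: "(\<lambda>n. (l n - ls) \<bullet> (l n + (\<sigma> * t (Suc n)) *\<^sub>R (l (Suc n) - l n) - ls)) \<longlonglongrightarrow> 0"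
    by (rule inner_to_zero[OF el Ul])
  have "(\<lambda>n. (1/\<gamma>) * ((\<sigma>/2 - 1) * (norm (x n - xs))\<^sup>2 + (x n - xs) \<bullet> (x n + (\<sigma> * t (Suc n)) *\<^sub>R (x (Suc n) - x n) - xs))
     + (1/\<delta>) * ((\<sigma>/2 - 1) * (norm (l n - ls))\<^sup>2 + (l n - ls) \<bullet> (l n + (\<sigma> * t (Suc n)) *\<^sub>R (l (Suc n) - l n) - ls))) \<longlonglongrightarrow>
     (1/\<gamma>) * ((\<sigma>/2 - 1) * 0 + 0) + (1/\<delta>) * ((\<sigma>/2 - 1) * 0 + 0)"
    by (intro tendsto_intros ex2 el2 ix il)
  then show ?thesis unfolding Rest_def by simp
qed


lemma W_nonneg: "W (Suc n) \<ge> 0"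
proof -
  have "t (Suc n) \<ge> 1" using t_ge1 by simp
  then show ?thesis unfolding W_def using Psi_nonneg[of "x (Suc n)"] beta sigma_gt1 gamma delta
    by (intro add_nonneg_nonneg mult_nonneg_nonneg divide_nonneg_nonneg) auto
qed

lemma W_weighted_summable: "summable (\<lambda>n. 1 / t (Suc n) * W (Suc n))"
proof -
  have bnd: "1 / t (Suc n) * W (Suc n) \<le> \<sigma>\<^sup>2 * s1 n + \<sigma>\<^sup>2 * s2 n + \<sigma>\<^sup>2 / (2 * \<gamma>) * s3 n + \<sigma>\<^sup>2 / (2 * \<delta>) * s4 n" for n
  proof -
    define T where "T = t (Suc n)"
    have T1: "T \<ge> 1" unfolding T_def using t_ge1 by simp
    have sT: "\<sigma> * T \<ge> 1" using mult_mono[of 1 \<sigma> 1 T] sigma_gt1 T1 by simp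
    have a: "1 / T * (\<sigma>\<^sup>2 * T\<^sup>2 * Psi (x (Suc n))) \<le> \<sigma>\<^sup>2 * s1 n"
    proof -
      have "1 / T * (\<sigma>\<^sup>2 * T\<^sup>2 * Psi (x (Suc n))) = \<sigma>\<^sup>2 * (T * Psi (x (Suc n)))"
        using T1 by (simp add: power2_eq_square field_simps)
      also have "\<dots> \<le> \<sigma>\<^sup>2 * s1 n" unfolding s1_def T_def
        using t_mono'[of n] Psi_nonneg[of "x (Suc n)"] by (intro mult_left_mono mult_right_mono) auto
      finally show ?thesis .
    qed
    have b: "1 / T * (\<beta> * \<sigma> * T * (\<sigma> * T + 1) / 2 * (norm (A *v x (Suc n) - b))\<^sup>2) \<le> \<sigma>\<^sup>2 * s2 n"
    proof -
      have "1 / T * (\<beta> * \<sigma> * T * (\<sigma> * T + 1) / 2 * (norm (A *v x (Suc n) - b))\<^sup>2) = (\<sigma> * T + 1) / 2 * (\<sigma> * (\<beta> * (norm (A *v x (Suc n) - b))\<^sup>2))"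
        using T1 by (simp add: field_simps)
      also have "\<dots> \<le> (\<sigma> * T) * (\<sigma> * (\<beta> * (norm (A *v x (Suc n) - b))\<^sup>2))"
        using sT beta sigma_gt1 by (intro mult_right_mono) (auto simp: mult.commute)
      also have "\<dots> = \<sigma>\<^sup>2 * s2 n" unfolding s2_def T_def by (simp add: power2_eq_square mult_ac)
      finally show ?thesis .
    qed
    have c: "1 / T * ((\<sigma> * T)\<^sup>2 / (2 * \<gamma>) * (norm (x (Suc n) - x n))\<^sup>2) = \<sigma>\<^sup>2 / (2 * \<gamma>) * s3 n"
      unfolding s3_def T_def[symmetric] using T1 by (simp add: power2_eq_square field_simps)
    have d: "1 / T * ((\<sigma> * T)\<^sup>2 / (2 * \<delta>) * (norm (l (Suc n) - l n))\<^sup>2) = \<sigma>\<^sup>2 / (2 * \<delta>) * s4 n"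
      unfolding s4_def T_def[symmetric] using T1 by (simp add: power2_eq_square field_simps)
    have "1 / T * W (Suc n) = 1 / T * (\<sigma>\<^sup>2 * T\<^sup>2 * Psi (x (Suc n))) + 1 / T * (\<beta> * \<sigma> * T * (\<sigma> * T + 1) / 2 * (norm (A *v x (Suc n) - b))\<^sup>2)
       + 1 / T * ((\<sigma> * T)\<^sup>2 / (2 * \<gamma>) * (norm (x (Suc n) - x n))\<^sup>2) + 1 / T * ((\<sigma> * T)\<^sup>2 / (2 * \<delta>) * (norm (l (Suc n) - l n))\<^sup>2)"
      unfolding W_def T_def by (simp only: distrib_left diff_Suc_1)
    then show ?thesis using a b c d unfolding T_def by linarith
  qed
  have "summable (\<lambda>n. \<sigma>\<^sup>2 * s1 n + \<sigma>\<^sup>2 * s2 n + \<sigma>\<^sup>2 / (2 * \<gamma>) * s3 n + \<sigma>\<^sup>2 / (2 * \<delta>) * s4 n)"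
    using s_summable by (intro summable_add summable_mult)
  then show ?thesis
  proof (rule summable_comparison_test[rotated], intro exI allI impI)
    fix n
    have "0 \<le> 1 / t (Suc n) * W (Suc n)" using W_nonneg[of n] t_pos[of "Suc n"] by simp
    then show "norm (1 / t (Suc n) * W (Suc n)) \<le> \<sigma>\<^sup>2 * s1 n + \<sigma>\<^sup>2 * s2 n + \<sigma>\<^sup>2 / (2 * \<gamma>) * s3 n + \<sigma>\<^sup>2 / (2 * \<delta>) * s4 n"
      using bnd[of n] by simp
  qed
qed

lemma W_lim: "(\<lambda>n. W (Suc n)) \<longlonglongrightarrow> 0"
proof -
  have "decseq (\<lambda>n. E (Suc n))"
  proof (rule decseq_SucI)
    fix n show "E (Suc (Suc n)) \<le> E (Suc n)" using E_dec[of n] r_nonneg[of n] by simp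
  qed
  moreover have "\<forall>i. 0 \<le> E (Suc i)" using E_nonneg by simp
  ultimately obtain Einf where EL: "(\<lambda>n. E (Suc n)) \<longlonglongrightarrow> Einf" by (rule decseq_convergent)
  have "(\<lambda>n. E (Suc n) - Rest (Suc n)) \<longlonglongrightarrow> Einf - 0" by (intro tendsto_diff EL Rest_lim)
  then have WL: "(\<lambda>n. W (Suc n)) \<longlonglongrightarrow> Einf" using E_split by simp
  have "Einf = 0"
    by (rule limit_zero_weighted[OF WL _ not_summable_inv_t W_weighted_summable W_nonneg])
      (use t_pos in \<open>simp add: less_imp_le\<close>)
  with WL show ?thesis by simp
qed

lemma lim_by_W: assumes "\<And>n. 0 \<le> u n" "\<And>n. u n \<le> C * W (Suc n)"
  shows "u \<longlonglongrightarrow> 0"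
proof (rule Lim_null_comparison)
  show "eventually (\<lambda>n. norm (u n) \<le> C * W (Suc n)) sequentially" using assms by simp
  show "(\<lambda>n. C * W (Suc n)) \<longlonglongrightarrow> 0" using tendsto_mult_right_zero[OF W_lim] by simp
qed

lemma W_parts: "(\<lambda>n. (t (Suc n))\<^sup>2 * Psi (x (Suc n))) \<longlonglongrightarrow> 0"
  "(\<lambda>n. (t (Suc n))\<^sup>2 * (\<beta> * (norm (A *v x (Suc n) - b))\<^sup>2)) \<longlonglongrightarrow> 0"
  "(\<lambda>n. (t (Suc n))\<^sup>2 * (norm (x (Suc n) - x n))\<^sup>2) \<longlonglongrightarrow> 0"
proof -
  have T1: "t (Suc n) \<ge> 1" for n using t_ge1 by simp
  have sp: "\<sigma>\<^sup>2 > 0" using sigma_gt1 by simp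
  have w0: "0 \<le> \<sigma>\<^sup>2 * (t (Suc n))\<^sup>2 * Psi (x (Suc n))"
     "0 \<le> \<beta> * \<sigma> * t (Suc n) * (\<sigma> * t (Suc n) + 1) / 2 * (norm (A *v x (Suc n) - b))\<^sup>2"
     "0 \<le> (\<sigma> * t (Suc n))\<^sup>2 / (2 * \<gamma>) * (norm (x (Suc n) - x n))\<^sup>2"
     "0 \<le> (\<sigma> * t (Suc n))\<^sup>2 / (2 * \<delta>) * (norm (l (Suc n) - l n))\<^sup>2" for n
    using Psi_nonneg[of "x (Suc n)"] beta sigma_gt1 gamma delta T1[of n] by auto
  have Wf: "W (Suc n) = \<sigma>\<^sup>2 * (t (Suc n))\<^sup>2 * Psi (x (Suc n)) + \<beta> * \<sigma> * t (Suc n) * (\<sigma> * t (Suc n) + 1) / 2 * (norm (A *v x (Suc n) - b))\<^sup>2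
     + (\<sigma> * t (Suc n))\<^sup>2 / (2 * \<gamma>) * (norm (x (Suc n) - x n))\<^sup>2 + (\<sigma> * t (Suc n))\<^sup>2 / (2 * \<delta>) * (norm (l (Suc n) - l n))\<^sup>2" for n
    unfolding W_def by simp
  show "(\<lambda>n. (t (Suc n))\<^sup>2 * Psi (x (Suc n))) \<longlonglongrightarrow> 0"
  proof (rule lim_by_W[where C = "1 / \<sigma>\<^sup>2"])
    fix n
    show "0 \<le> (t (Suc n))\<^sup>2 * Psi (x (Suc n))" using Psi_nonneg by simp
    have "\<sigma>\<^sup>2 * ((t (Suc n))\<^sup>2 * Psi (x (Suc n))) \<le> W (Suc n)" using Wf[of n] w0[of n] by (simp add: mult.assoc)
    then show "(t (Suc n))\<^sup>2 * Psi (x (Suc n)) \<le> 1 / \<sigma>\<^sup>2 * W (Suc n)" using sp by (simp add: field_simps)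
  qed
  show "(\<lambda>n. (t (Suc n))\<^sup>2 * (\<beta> * (norm (A *v x (Suc n) - b))\<^sup>2)) \<longlonglongrightarrow> 0"
  proof (rule lim_by_W[where C = "2 / \<sigma>\<^sup>2"])
    fix n
    show "0 \<le> (t (Suc n))\<^sup>2 * (\<beta> * (norm (A *v x (Suc n) - b))\<^sup>2)" using beta by simp
    have "\<sigma>\<^sup>2 / 2 * ((t (Suc n))\<^sup>2 * (\<beta> * (norm (A *v x (Suc n) - b))\<^sup>2)) \<le> \<beta> * \<sigma> * t (Suc n) * (\<sigma> * t (Suc n) + 1) / 2 * (norm (A *v x (Suc n) - b))\<^sup>2"
    proof -
      have "\<sigma>\<^sup>2 / 2 * ((t (Suc n))\<^sup>2 * (\<beta> * (norm (A *v x (Suc n) - b))\<^sup>2)) = (\<sigma> * t (Suc n)) * (\<sigma> * t (Suc n)) * (\<beta> * (norm (A *v x (Suc n) - b))\<^sup>2 / 2)"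
        by (simp add: power2_eq_square mult_ac)
      also have "\<dots> \<le> (\<sigma> * t (Suc n)) * (\<sigma> * t (Suc n) + 1) * (\<beta> * (norm (A *v x (Suc n) - b))\<^sup>2 / 2)"
        using beta sigma_gt1 T1[of n] by (intro mult_right_mono mult_left_mono) auto
      also have "\<dots> = \<beta> * \<sigma> * t (Suc n) * (\<sigma> * t (Suc n) + 1) / 2 * (norm (A *v x (Suc n) - b))\<^sup>2"
        by (simp add: mult_ac)
      finally show ?thesis .
    qed
    then have "\<sigma>\<^sup>2 / 2 * ((t (Suc n))\<^sup>2 * (\<beta> * (norm (A *v x (Suc n) - b))\<^sup>2)) \<le> W (Suc n)" using Wf[of n] w0[of n] by linarith
    then show "(t (Suc n))\<^sup>2 * (\<beta> * (norm (A *v x (Suc n) - b))\<^sup>2) \<le> 2 / \<sigma>\<^sup>2 * W (Suc n)" using sp by (simp add: field_simps)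
  qed
  show "(\<lambda>n. (t (Suc n))\<^sup>2 * (norm (x (Suc n) - x n))\<^sup>2) \<longlonglongrightarrow> 0"
  proof (rule lim_by_W[where C = "2 * \<gamma> / \<sigma>\<^sup>2"])
    fix n
    show "0 \<le> (t (Suc n))\<^sup>2 * (norm (x (Suc n) - x n))\<^sup>2" by simp
    have "(\<sigma> * t (Suc n))\<^sup>2 / (2 * \<gamma>) * (norm (x (Suc n) - x n))\<^sup>2 \<le> W (Suc n)" using Wf[of n] w0[of n] by linarith
    then show "(t (Suc n))\<^sup>2 * (norm (x (Suc n) - x n))\<^sup>2 \<le> 2 * \<gamma> / \<sigma>\<^sup>2 * W (Suc n)"
      using sp gamma by (simp add: field_simps power_mult_distrib)
  qed
qed

end



lemma sq4: fixes p q r s :: real shows "(p + q + r + s)\<^sup>2 \<le> 4 * (p\<^sup>2 + q\<^sup>2 + r\<^sup>2 + s\<^sup>2)"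
proof -
  have "0 \<le> (p-q)\<^sup>2 + (p-r)\<^sup>2 + (p-s)\<^sup>2 + (q-r)\<^sup>2 + (q-s)\<^sup>2 + (r-s)\<^sup>2" by simp
  then show ?thesis by (simp add: power2_eq_square algebra_simps)
qed

lemma sq2: fixes p q :: real shows "(p + q)\<^sup>2 \<le> 2 * (p\<^sup>2 + q\<^sup>2)"
proof -
  have "0 \<le> (p-q)\<^sup>2" by simp
  then show ?thesis by (simp add: power2_eq_square algebra_simps)
qed

lemma norm4_sq: fixes a b c d :: "'a::real_normed_vector"
  shows "(norm (a + b + c + d))\<^sup>2 \<le> 4 * ((norm a)\<^sup>2 + (norm b)\<^sup>2 + (norm c)\<^sup>2 + (norm d)\<^sup>2)"
proof -
  have "norm (a + b + c + d) \<le> norm a + norm b + norm c + norm d"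
  proof -
    have "norm (a + b + c + d) \<le> norm (a + b + c) + norm d" by (rule norm_triangle_ineq)
    moreover have "norm (a + b + c) \<le> norm (a + b) + norm c" by (rule norm_triangle_ineq)
    moreover have "norm (a + b) \<le> norm a + norm b" by (rule norm_triangle_ineq)
    ultimately show ?thesis by linarith
  qed
  then have "(norm (a + b + c + d))\<^sup>2 \<le> (norm a + norm b + norm c + norm d)\<^sup>2"
    by (intro power_mono) auto
  also have "\<dots> \<le> 4 * ((norm a)\<^sup>2 + (norm b)\<^sup>2 + (norm c)\<^sup>2 + (norm d)\<^sup>2)" by (rule sq4)
  finally show ?thesis .
qed

lemma comb4: fixes N a1 b1 c1 d1 A1 B1 C1 D1 :: real
  shows "N \<le> 4 * (a1 + b1 + c1 + d1) \<Longrightarrow> a1 \<le> A1 \<Longrightarrow> b1 \<le> B1 \<Longrightarrow> c1 \<le> C1 \<Longrightarrow> d1 \<le> D1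
    \<Longrightarrow> N \<le> 4 * A1 + 4 * B1 + 4 * C1 + 4 * D1"
  by (simp add: algebra_simps)

lemma lin_rec: fixes z1 z2 zs :: "'a::real_vector"
  shows "e * c = 1 \<Longrightarrow> z2 - zs = (1 - e) *\<^sub>R (z1 - zs) + e *\<^sub>R (z1 + c *\<^sub>R (z2 - z1) - zs)"
  by (simp add: algebra_simps)

lemma norm2_sq: fixes a b :: "'a::real_normed_vector"
  shows "(norm (a + b))\<^sup>2 \<le> 2 * ((norm a)\<^sup>2 + (norm b)\<^sup>2)"
proof -
  have "(norm (a + b))\<^sup>2 \<le> (norm a + norm b)\<^sup>2" by (intro power_mono norm_triangle_ineq) auto
  also have "\<dots> \<le> 2 * ((norm a)\<^sup>2 + (norm b)\<^sup>2)" by (rule sq2)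
  finally show ?thesis .
qed

context aalm begin

definition G :: "(nat \<Rightarrow> real) \<Rightarrow> bool" where
  "G v \<longleftrightarrow> ((\<lambda>k. (t (Suc k))\<^sup>2 * v k) \<longlonglongrightarrow> 0) \<and> summable (\<lambda>k. t (Suc k) * v k)"

lemma G_add: "G u \<Longrightarrow> G v \<Longrightarrow> G (\<lambda>k. u k + v k)"
  unfolding G_def by (auto simp: distrib_left intro: tendsto_add_zero summable_add)

lemma G_cmult: "G u \<Longrightarrow> G (\<lambda>k. c * u k)"
proof -
  assume "G u"
  then have a: "(\<lambda>k. (t (Suc k))\<^sup>2 * u k) \<longlonglongrightarrow> 0" and b: "summable (\<lambda>k. t (Suc k) * u k)" unfolding G_def by auto
  have "(\<lambda>k. c * ((t (Suc k))\<^sup>2 * u k)) \<longlonglongrightarrow> 0" using tendsto_mult_right_zero[OF a] by simp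
  moreover have "summable (\<lambda>k. c * (t (Suc k) * u k))" using b by (rule summable_mult)
  ultimately show ?thesis unfolding G_def by (simp add: mult.left_commute)
qed

lemma G_mono: assumes "G u" "\<And>k. 0 \<le> v k" "eventually (\<lambda>k. v k \<le> u k) sequentially"
  shows "G v"
proof -
  have a: "(\<lambda>k. (t (Suc k))\<^sup>2 * u k) \<longlonglongrightarrow> 0" and b: "summable (\<lambda>k. t (Suc k) * u k)"
    using assms(1) unfolding G_def by auto
  have tp: "t (Suc k) > 0" for k using t_pos by simp
  have "(\<lambda>k. (t (Suc k))\<^sup>2 * v k) \<longlonglongrightarrow> 0"
  proof (rule Lim_null_comparison[OF _ a])
    show "eventually (\<lambda>k. norm ((t (Suc k))\<^sup>2 * v k) \<le> (t (Suc k))\<^sup>2 * u k) sequentially"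
      using assms(3) by eventually_elim (use assms(2) in \<open>auto intro: mult_left_mono\<close>)
  qed
  moreover have "summable (\<lambda>k. t (Suc k) * v k)"
  proof (rule summable_comparison_test_ev[OF _ b])
    show "eventually (\<lambda>k. norm (t (Suc k) * v k) \<le> t (Suc k) * u k) sequentially"
      using assms(3) by eventually_elim (use assms(2) tp in \<open>auto intro: mult_left_mono simp: abs_mult less_imp_le\<close>)
  qed
  ultimately show ?thesis unfolding G_def by simp
qed

lemma G_shift: assumes "G u" "\<And>k. 0 \<le> u k" shows "G (\<lambda>k. u (Suc k))"
proof -
  have a: "(\<lambda>k. (t (Suc k))\<^sup>2 * u k) \<longlonglongrightarrow> 0" and b: "summable (\<lambda>k. t (Suc k) * u k)"
    using assms(1) unfolding G_def by auto
  have a': "(\<lambda>k. (t (Suc (Suc k)))\<^sup>2 * u (Suc k)) \<longlonglongrightarrow> 0" using LIMSEQ_Suc[OF a] .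
  have b': "summable (\<lambda>k. t (Suc (Suc k)) * u (Suc k))" using b by (subst summable_Suc_iff)
  have le: "t (Suc k) \<le> t (Suc (Suc k))" "0 < t (Suc k)" for k using t_mono' t_pos by auto
  have "(\<lambda>k. (t (Suc k))\<^sup>2 * u (Suc k)) \<longlonglongrightarrow> 0"
  proof (rule Lim_null_comparison[OF _ a'], rule always_eventually, rule allI)
    fix k
    have "(t (Suc k))\<^sup>2 \<le> (t (Suc (Suc k)))\<^sup>2" using le[of k] by (intro power_mono) auto
    then show "norm ((t (Suc k))\<^sup>2 * u (Suc k)) \<le> (t (Suc (Suc k)))\<^sup>2 * u (Suc k)"
      using assms(2)[of "Suc k"] by (simp add: mult_right_mono)
  qed
  moreover have "summable (\<lambda>k. t (Suc k) * u (Suc k))"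
  proof (rule summable_comparison_test[OF _ b'], intro exI allI impI)
    fix k show "norm (t (Suc k) * u (Suc k)) \<le> t (Suc (Suc k)) * u (Suc k)"
      using le[of k] assms(2)[of "Suc k"] by (simp add: abs_mult mult_right_mono)
  qed
  ultimately show ?thesis unfolding G_def by simp
qed

lemma G_unshift: assumes "G (\<lambda>k. u (Suc k))" "\<And>k. 0 \<le> u k" shows "G u"
proof -
  have a: "(\<lambda>k. (t (Suc k))\<^sup>2 * u (Suc k)) \<longlonglongrightarrow> 0" and b: "summable (\<lambda>k. t (Suc k) * u (Suc k))"
    using assms(1) unfolding G_def by auto
  have le: "t (Suc (Suc k)) \<le> 2 * t (Suc k)" "0 < t (Suc k)" "0 < t (Suc (Suc k))" for k using t2 t_pos by auto
  have "(\<lambda>k. (t (Suc (Suc k)))\<^sup>2 * u (Suc k)) \<longlonglongrightarrow> 0"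
  proof (rule Lim_null_comparison)
    show "(\<lambda>k. 4 * ((t (Suc k))\<^sup>2 * u (Suc k))) \<longlonglongrightarrow> 0" using tendsto_mult_right_zero[OF a] by simp
    show "eventually (\<lambda>k. norm ((t (Suc (Suc k)))\<^sup>2 * u (Suc k)) \<le> 4 * ((t (Suc k))\<^sup>2 * u (Suc k))) sequentially"
    proof (rule always_eventually, rule allI)
      fix k
      have "(t (Suc (Suc k)))\<^sup>2 \<le> (2 * t (Suc k))\<^sup>2" using le[of k] by (intro power_mono) auto
      then have "(t (Suc (Suc k)))\<^sup>2 * u (Suc k) \<le> (2 * t (Suc k))\<^sup>2 * u (Suc k)"
        using assms(2)[of "Suc k"] by (simp add: mult_right_mono)
      then show "norm ((t (Suc (Suc k)))\<^sup>2 * u (Suc k)) \<le> 4 * ((t (Suc k))\<^sup>2 * u (Suc k))"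
        using assms(2)[of "Suc k"] by (simp add: power_mult_distrib)
    qed
  qed
  then have "(\<lambda>k. (t (Suc k))\<^sup>2 * u k) \<longlonglongrightarrow> 0" by (rule LIMSEQ_imp_Suc)
  moreover have "summable (\<lambda>k. t (Suc k) * u k)"
  proof -
    have "summable (\<lambda>k. t (Suc (Suc k)) * u (Suc k))"
    proof (rule summable_comparison_test[OF _ summable_mult[OF b, of 2]], intro exI allI impI)
      fix k show "norm (t (Suc (Suc k)) * u (Suc k)) \<le> 2 * (t (Suc k) * u (Suc k))"
        using mult_right_mono[OF le(1)[of k] assms(2)[of "Suc k"]] le(3)[of k] assms(2)[of "Suc k"] by (simp add: abs_mult)
    qed
    then show ?thesis by (subst (asm) summable_Suc_iff)
  qed
  ultimately show ?thesis unfolding G_def by simp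
qed

lemma G_Psi: "G (\<lambda>k. Psi (x k))"
proof (rule G_unshift[OF _ Psi_nonneg])
  show "G (\<lambda>k. Psi (x (Suc k)))" unfolding G_def
  proof
    show "(\<lambda>k. (t (Suc k))\<^sup>2 * Psi (x (Suc k))) \<longlonglongrightarrow> 0" by (rule W_parts(1))
    show "summable (\<lambda>k. t (Suc k) * Psi (x (Suc k)))"
    proof (rule summable_comparison_test[OF _ s_summable(1)], intro exI allI impI)
      fix k show "norm (t (Suc k) * Psi (x (Suc k))) \<le> s1 k"
        unfolding s1_def using t_mono'[of k] t_pos[of "Suc k"] Psi_nonneg[of "x (Suc k)"]
        by (simp add: abs_mult mult_right_mono)
    qed
  qed
qed

lemma G_dd: "G (\<lambda>n. (norm (x (Suc n) - x n))\<^sup>2)"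
  unfolding G_def using W_parts(3) s_summable(3) unfolding s3_def by simp

lemma G_q: "G (\<lambda>n. \<beta> * (norm (A *v x (Suc n) - b))\<^sup>2)"
  unfolding G_def using W_parts(2) s_summable(2) unfolding s2_def by (simp add: mult_ac)

lemma G_D: "G (\<lambda>k. (norm (gf (x k) - gf xs))\<^sup>2)"
  by (rule G_mono[OF G_cmult[OF G_Psi, of "2 * L"]]) (use grad_Psi_bound in \<open>auto simp: mult.assoc\<close>)


definition "V k = (gf (extrap t x k) - gf xs) + \<beta> *\<^sub>R (transpose A *v (A *v x (Suc k) - b))
   + (1/\<gamma>) *\<^sub>R (x (Suc k) - extrap t x k)"

lemma AT_bound: "\<exists>K\<ge>0. \<forall>v. norm (transpose A *v v) \<le> norm v * K"
  by (rule bounded_linear.nonneg_bounded[OF matrix_vector_mul_bounded_linear])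

lemma V_bound: assumes k: "k \<ge> 1" and K: "K \<ge> 0" "\<And>v. norm (transpose A *v v) \<le> norm v * K"
  shows "(norm (V k))\<^sup>2 \<le> 4 * (L\<^sup>2 * (norm (x (Suc (k-1)) - x (k-1)))\<^sup>2) + 4 * (2 * L * Psi (x k))
     + 4 * (\<beta> * K\<^sup>2 * (\<beta> * (norm (A *v x (Suc k) - b))\<^sup>2))
     + 4 * (2 / \<gamma>\<^sup>2 * ((norm (x (Suc k) - x k))\<^sup>2 + (norm (x (Suc (k-1)) - x (k-1)))\<^sup>2))"
proof -
  define \<theta> where "\<theta> = (t k - 1) / t (Suc k)"
  have th: "0 \<le> \<theta>" "\<theta> \<le> 1" unfolding \<theta>_def using t_ge1[of k] t_ge1[of "Suc k"] t_mono[of k] k by auto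
  have kk: "Suc (k-1) = k" using k by simp
  define dk where "dk = x k - x (k-1)"
  have xb: "extrap t x k = x k + \<theta> *\<^sub>R dk" unfolding extrap_def \<theta>_def dk_def ..
  define v1 where "v1 = gf (extrap t x k) - gf (x k)"
  define v2 where "v2 = gf (x k) - gf xs"
  define v3 where "v3 = \<beta> *\<^sub>R (transpose A *v (A *v x (Suc k) - b))"
  define v4 where "v4 = (1/\<gamma>) *\<^sub>R (x (Suc k) - extrap t x k)"
  have Vs: "V k = v1 + v2 + v3 + v4" unfolding V_def v1_def v2_def v3_def v4_def by simp
  have n1: "(norm v1)\<^sup>2 \<le> L\<^sup>2 * (norm dk)\<^sup>2"
  proof -
    have "norm v1 \<le> L * norm (\<theta> *\<^sub>R dk)" unfolding v1_def using grad_lip[of "extrap t x k" "x k"] xb by simp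
    also have "\<dots> \<le> L * norm dk" using th L_pos by (simp add: mult_left_le_one_le mult_left_mono)
    finally have "norm v1 \<le> L * norm dk" .
    then have "(norm v1)\<^sup>2 \<le> (L * norm dk)\<^sup>2" by (intro power_mono) auto
    then show ?thesis by (simp add: power_mult_distrib)
  qed
  have n2: "(norm v2)\<^sup>2 \<le> 2 * L * Psi (x k)" unfolding v2_def by (rule grad_Psi_bound)
  have n3: "(norm v3)\<^sup>2 \<le> \<beta> * K\<^sup>2 * (\<beta> * (norm (A *v x (Suc k) - b))\<^sup>2)"
  proof -
    have "norm v3 \<le> \<beta> * (norm (A *v x (Suc k) - b) * K)" unfolding v3_def using beta K(2) by (simp add: mult_left_mono)
    then have "(norm v3)\<^sup>2 \<le> (\<beta> * (norm (A *v x (Suc k) - b) * K))\<^sup>2" by (intro power_mono) auto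
    then show ?thesis by (simp add: power_mult_distrib power2_eq_square mult_ac)
  qed
  have n4: "(norm v4)\<^sup>2 \<le> 2 / \<gamma>\<^sup>2 * ((norm (x (Suc k) - x k))\<^sup>2 + (norm dk)\<^sup>2)"
  proof -
    have e: "x (Suc k) - extrap t x k = (x (Suc k) - x k) - \<theta> *\<^sub>R dk" unfolding xb by (simp add: algebra_simps)
    have "norm (x (Suc k) - extrap t x k) \<le> norm (x (Suc k) - x k) + norm (\<theta> *\<^sub>R dk)"
      unfolding e by (rule norm_triangle_ineq4)
    moreover have "norm (\<theta> *\<^sub>R dk) \<le> norm dk" using th by (simp add: mult_left_le_one_le)
    ultimately have "norm (x (Suc k) - extrap t x k) \<le> norm (x (Suc k) - x k) + norm dk" by linarith
    then have "(norm (x (Suc k) - extrap t x k))\<^sup>2 \<le> (norm (x (Suc k) - x k) + norm dk)\<^sup>2"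
      by (intro power_mono) auto
    also have "\<dots> \<le> 2 * ((norm (x (Suc k) - x k))\<^sup>2 + (norm dk)\<^sup>2)" by (rule sq2)
    finally have "(norm (x (Suc k) - extrap t x k))\<^sup>2 \<le> 2 * ((norm (x (Suc k) - x k))\<^sup>2 + (norm dk)\<^sup>2)" .
    moreover have "(norm v4)\<^sup>2 = (1/\<gamma>)\<^sup>2 * (norm (x (Suc k) - extrap t x k))\<^sup>2"
      unfolding v4_def using gamma by (simp add: power_divide)
    ultimately show ?thesis using gamma by (simp add: field_simps)
  qed
  have "(norm (V k))\<^sup>2 \<le> 4 * ((norm v1)\<^sup>2 + (norm v2)\<^sup>2 + (norm v3)\<^sup>2 + (norm v4)\<^sup>2)"
    unfolding Vs by (rule norm4_sq)
  then show ?thesis using n1 n2 n3 n4 unfolding dk_def kk by (rule comb4)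
qed

lemma G_V: "G (\<lambda>k. (norm (V k))\<^sup>2)"
proof -
  obtain K where K: "K \<ge> 0" "\<And>v. norm (transpose A *v v) \<le> norm v * K" using AT_bound by blast
  define dd where "dd n = (norm (x (Suc n) - x n))\<^sup>2" for n
  have Gdd: "G dd" unfolding dd_def by (rule G_dd)
  have "G (\<lambda>k. dd (Suc k - 1))" using Gdd by simp
  then have Gdd1: "G (\<lambda>k. dd (k-1))" by (rule G_unshift) (simp add: dd_def)
  have "G (\<lambda>k. 4 * (L\<^sup>2 * dd (k-1)) + 4 * (2 * L * Psi (x k))
     + 4 * (\<beta> * K\<^sup>2 * (\<beta> * (norm (A *v x (Suc k) - b))\<^sup>2))
     + 4 * (2 / \<gamma>\<^sup>2 * (dd k + dd (k-1))))"
    by (intro G_add G_cmult Gdd Gdd1 G_Psi G_q)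
  then show ?thesis
  proof (rule G_mono)
    show "eventually (\<lambda>k. (norm (V k))\<^sup>2 \<le> 4 * (L\<^sup>2 * dd (k-1)) + 4 * (2 * L * Psi (x k))
     + 4 * (\<beta> * K\<^sup>2 * (\<beta> * (norm (A *v x (Suc k) - b))\<^sup>2))
     + 4 * (2 / \<gamma>\<^sup>2 * (dd k + dd (k-1)))) sequentially"
      using eventually_ge_at_top[of 1] by eventually_elim (use V_bound K in \<open>simp add: dd_def\<close>)
  qed simp
qed


definition "N k = transpose A *v (l k - ls)"

lemma ATmu: assumes k: "k \<ge> 1" shows "transpose A *v (mu k - ls) = - V k"
proof -
  have o: "gf (extrap t x k) + \<beta> *\<^sub>R (transpose A *v (A *v x (Suc k) - b))
     + (1/\<gamma>) *\<^sub>R (x (Suc k) - extrap t x k) + transpose A *v mu k = 0" by (rule opt_eq[OF k])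
  have g: "transpose A *v ls = - gf xs" using KKT(2) by (simp add: eq_neg_iff_add_eq_0 add.commute)
  have "transpose A *v (mu k - ls) = transpose A *v mu k - transpose A *v ls"
    by (simp only: matrix_vector_mult_diff_distrib)
  also have "\<dots> = - V k" unfolding g V_def using o
    by (simp only: eq_neg_iff_add_eq_0[symmetric] diff_minus_eq_add) (simp add: algebra_simps eq_neg_iff_add_eq_0)
  finally show ?thesis .
qed

lemma N_rec: assumes k: "k \<ge> 1"
  shows "N (Suc k) = (1 - \<eta> / t (Suc k)) *\<^sub>R N k - (\<eta> / t (Suc k)) *\<^sub>R V k"
proof -
  define T where "T = t (Suc k)"
  have T0: "T > 0" unfolding T_def using t_pos by simp
  have ec: "\<eta> / T * (\<sigma> * T) = 1" using T0 sigma_eta by (simp add: field_simps)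
  have "l (Suc k) - ls = (1 - \<eta> / T) *\<^sub>R (l k - ls) + (\<eta> / T) *\<^sub>R (l k + (\<sigma> * T) *\<^sub>R (l (Suc k) - l k) - ls)"
    by (rule lin_rec[OF ec])
  then have "l (Suc k) - ls = (1 - \<eta> / T) *\<^sub>R (l k - ls) + (\<eta> / T) *\<^sub>R (mu k - ls)"
    unfolding mu_def T_def .
  then have "N (Suc k) = (1 - \<eta> / T) *\<^sub>R N k + (\<eta> / T) *\<^sub>R (transpose A *v (mu k - ls))"
    unfolding N_def by (simp only: matrix_vector_right_distrib matrix_vector_mult_scaleR)
  then show ?thesis unfolding ATmu[OF k] T_def by simp
qed

lemma N_step: assumes k: "k \<ge> 1"
  shows "t (Suc k) * norm (N (Suc k)) \<le> (1 - (\<eta> - \<rho>) * (1 / t k)) * (t k * norm (N k)) + \<eta> * norm (V k)"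
proof -
  define T where "T = t (Suc k)"
  have T1: "T \<ge> 1" unfolding T_def using t_ge1 by simp
  have tk: "t k \<ge> 1" using t_ge1 k by simp
  have TT: "T \<le> t k + \<rho>" unfolding T_def by (rule t_incr[OF k])
  have c0: "0 \<le> 1 - \<eta> / T" using T1 eta by (simp add: field_simps)
  have "norm (N (Suc k)) \<le> norm ((1 - \<eta> / T) *\<^sub>R N k) + norm ((\<eta> / T) *\<^sub>R V k)"
    unfolding N_rec[OF k] T_def[symmetric] by (rule norm_triangle_ineq4)
  also have "\<dots> = (1 - \<eta> / T) * norm (N k) + (\<eta> / T) * norm (V k)"
    using c0 T1 eta_pos by simp
  finally have "T * norm (N (Suc k)) \<le> T * ((1 - \<eta> / T) * norm (N k) + (\<eta> / T) * norm (V k))"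
    using T1 by (intro mult_left_mono) auto
  also have "\<dots> = (T - \<eta>) * norm (N k) + \<eta> * norm (V k)" using T1 by (simp add: field_simps)
  also have "(T - \<eta>) * norm (N k) \<le> (t k - (\<eta> - \<rho>)) * norm (N k)"
    using TT by (intro mult_right_mono) auto
  also have "(t k - (\<eta> - \<rho>)) * norm (N k) = (1 - (\<eta> - \<rho>) * (1 / t k)) * (t k * norm (N k))"
    using tk by (simp add: field_simps)
  finally show ?thesis unfolding T_def by simp
qed

lemma G_N: "G (\<lambda>k. (norm (N k))\<^sup>2)"
proof -
  define h where "h n = t (Suc n) * norm (N (Suc n))" for n
  define a where "a n = 1 / t (Suc n)" for n
  define bb where "bb n = \<eta> * norm (V (Suc n))" for n
  have tp: "t (Suc n) \<ge> 1" for n using t_ge1 by simp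
    have p1: "0 \<le> h n" for n unfolding h_def using tp[of n] by simp
    have p2: "0 < a n" for n unfolding a_def using tp[of n] by simp
    have p3: "a n \<le> 1" for n unfolding a_def using tp[of n] by simp
    have p4: "0 < \<eta> - \<rho>" using eta by simp
    have p5: "\<eta> - \<rho> \<le> 1" using eta rho by simp
    have p6: "h (Suc n) \<le> (1 - (\<eta> - \<rho>) * a n) * h n + bb n" for n
      unfolding h_def a_def bb_def using N_step[of "Suc n"] by simp
    have p7: "0 \<le> bb n" for n unfolding bb_def using eta_pos by simp
    have p9: "\<not> summable a" unfolding a_def by (rule not_summable_inv_t)
    have p8: "summable (\<lambda>n. (bb n)\<^sup>2 / a n)"
    proof -
      have "summable (\<lambda>k. t (Suc k) * (norm (V k))\<^sup>2)" using G_V unfolding G_def by simp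
      then have "summable (\<lambda>n. t (Suc (Suc n)) * (norm (V (Suc n)))\<^sup>2)" by (subst summable_Suc_iff)
      then have s: "summable (\<lambda>n. \<eta>\<^sup>2 * (t (Suc (Suc n)) * (norm (V (Suc n)))\<^sup>2))" by (rule summable_mult)
      show ?thesis
      proof (rule summable_comparison_test[OF _ s], intro exI allI impI)
        fix n
        have "(bb n)\<^sup>2 / a n = \<eta>\<^sup>2 * (t (Suc n) * (norm (V (Suc n)))\<^sup>2)"
          unfolding bb_def a_def using tp[of n] by (simp add: power_mult_distrib)
        also have "\<dots> \<le> \<eta>\<^sup>2 * (t (Suc (Suc n)) * (norm (V (Suc n)))\<^sup>2)"
          using t_mono'[of n] by (intro mult_left_mono mult_right_mono) auto
        finally show "norm ((bb n)\<^sup>2 / a n) \<le> \<eta>\<^sup>2 * (t (Suc (Suc n)) * (norm (V (Suc n)))\<^sup>2)"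
          using tp[of n] unfolding a_def by simp
      qed
    qed
    have hr: "h \<longlonglongrightarrow> 0 \<and> summable (\<lambda>n. a n * (h n)\<^sup>2)"
      using rec_lemma[OF p1 p2 p3 p4 p5 p6 p7 p8 p9] by blast
  have "G (\<lambda>n. (norm (N (Suc n)))\<^sup>2)" unfolding G_def
  proof
    have "(\<lambda>n. (h n)\<^sup>2) \<longlonglongrightarrow> 0\<^sup>2" using hr by (intro tendsto_power) simp
    then show "(\<lambda>k. (t (Suc k))\<^sup>2 * (norm (N (Suc k)))\<^sup>2) \<longlonglongrightarrow> 0" unfolding h_def by (simp add: power_mult_distrib)
    have "(\<lambda>n. a n * (h n)\<^sup>2) = (\<lambda>k. t (Suc k) * (norm (N (Suc k)))\<^sup>2)"
      unfolding a_def h_def using tp by (auto simp: fun_eq_iff power2_eq_square)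
    then show "summable (\<lambda>k. t (Suc k) * (norm (N (Suc k)))\<^sup>2)" using hr by simp
  qed
  then show ?thesis by (rule G_unshift) simp
qed

lemma R_eq: "gf (x k) + transpose A *v l k = (gf (x k) - gf xs) + N k"
proof -
  have g: "transpose A *v ls = - gf xs" using KKT(2) by (simp add: eq_neg_iff_add_eq_0 add.commute)
  have "N k = transpose A *v l k - transpose A *v ls" unfolding N_def by (simp only: matrix_vector_mult_diff_distrib)
  then show ?thesis unfolding g by simp
qed

lemma G_R: "G (\<lambda>k. (norm (gf (x k) + transpose A *v l k))\<^sup>2)"
proof (rule G_mono[OF G_cmult[OF G_add[OF G_D G_N], of 2]])
  show "eventually (\<lambda>k. (norm (gf (x k) + transpose A *v l k))\<^sup>2 \<le> 2 * ((norm (gf (x k) - gf xs))\<^sup>2 + (norm (N k))\<^sup>2)) sequentially"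
    unfolding R_eq by (intro always_eventually allI norm2_sq)
qed simp

lemma main_result:
  "(\<lambda>k. norm (gf (x k) + transpose A *v l k)) \<in> o(\<lambda>k. 1 / t k)
   \<and> summable (\<lambda>k. t (Suc k) * (norm (gf (x k) + transpose A *v l k))\<^sup>2)"
proof
  have GR: "(\<lambda>k. (t (Suc k))\<^sup>2 * (norm (gf (x k) + transpose A *v l k))\<^sup>2) \<longlonglongrightarrow> 0"
    "summable (\<lambda>k. t (Suc k) * (norm (gf (x k) + transpose A *v l k))\<^sup>2)"
    using G_R unfolding G_def by auto
  show "summable (\<lambda>k. t (Suc k) * (norm (gf (x k) + transpose A *v l k))\<^sup>2)" by (rule GR(2))
  show "(\<lambda>k. norm (gf (x k) + transpose A *v l k)) \<in> o(\<lambda>k. 1 / t k)"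
  proof (rule smalloI_tendsto)
    have sq: "(\<lambda>k. sqrt ((t (Suc k))\<^sup>2 * (norm (gf (x k) + transpose A *v l k))\<^sup>2)) \<longlonglongrightarrow> sqrt 0"
      by (rule tendsto_real_sqrt[OF GR(1)])
    then have sq0: "(\<lambda>k. sqrt ((t (Suc k))\<^sup>2 * (norm (gf (x k) + transpose A *v l k))\<^sup>2)) \<longlonglongrightarrow> 0"
      by (simp only: real_sqrt_zero)
    show "(\<lambda>k. norm (gf (x k) + transpose A *v l k) / (1 / t k)) \<longlonglongrightarrow> 0"
    proof (rule Lim_null_comparison[OF _ sq0])
      show "eventually (\<lambda>k. norm (norm (gf (x k) + transpose A *v l k) / (1 / t k))
          \<le> sqrt ((t (Suc k))\<^sup>2 * (norm (gf (x k) + transpose A *v l k))\<^sup>2)) sequentially"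
        using eventually_ge_at_top[of 1]
      proof eventually_elim
        case (elim k)
        have tk: "t k \<ge> 1" "t k \<le> t (Suc k)" using t_ge1[OF elim] t_mono[OF elim] by auto
        have "sqrt ((t (Suc k))\<^sup>2 * (norm (gf (x k) + transpose A *v l k))\<^sup>2) = t (Suc k) * norm (gf (x k) + transpose A *v l k)"
          using tk by (simp add: real_sqrt_mult)
        moreover have "norm (norm (gf (x k) + transpose A *v l k) / (1 / t k)) = t k * norm (gf (x k) + transpose A *v l k)"
          using tk by simp
        moreover have "t k * norm (gf (x k) + transpose A *v l k) \<le> t (Suc k) * norm (gf (x k) + transpose A *v l k)"
          using tk by (intro mult_right_mono) auto
        ultimately show ?case by simp
      qed
    qed
    show "eventually (\<lambda>k. 1 / t k \<noteq> 0) sequentially"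
      using eventually_ge_at_top[of 1] by eventually_elim (use t_ge1 in force)
  qed
qed

end

theorem theorem4p4:
  fixes f :: "real^'n \<Rightarrow> real" and gf :: "real^'n \<Rightarrow> real^'n"
    and A :: "real^'n^'m" and b :: "real^'m"
    and L \<rho> \<eta> \<gamma> \<delta> \<beta> :: real and t :: "nat \<Rightarrow> real"
    and x :: "nat \<Rightarrow> real^'n" and l :: "nat \<Rightarrow> real^'m"
    and xs :: "real^'n" and ls :: "real^'m"
  assumes f_convex: "convex_on UNIV f"
    and f_grad: "\<And>z. (f has_derivative (\<lambda>h. gf z \<bullet> h)) (at z)"
    and L_pos: "L > 0"
    and grad_lip: "\<And>y z. norm (gf y - gf z) \<le> L * norm (y - z)"
    and Omega_nonempty: "KKT_set gf A b \<noteq> {}"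
    and t_mono: "\<And>k. k \<ge> 1 \<Longrightarrow> t k \<le> t (Suc k)"
    and t_1: "t 1 = 1"
    and t_gt1: "\<And>k. k > 2 \<Longrightarrow> t k > 1"
    and t_lim: "filterlim t at_top sequentially"
    and t_growth: "\<And>k. k \<ge> 1 \<Longrightarrow> (t (Suc k))\<^sup>2 - (t k)\<^sup>2 \<le> \<rho> * t (Suc k)"
    and rho: "0 < \<rho>" "\<rho> < 1"
    and eta: "\<rho> < \<eta>" "\<eta> < 1"
    and gamma: "\<gamma> > 0" "\<gamma> \<le> 1 / L"
    and delta: "\<delta> > 0"
    and beta: "\<beta> \<ge> 0"
    and init: "x 0 = x 1" "l 0 = l 1"
    and x_step: "\<And>k y. k \<ge> 1 \<Longrightarrow>
        subproblem_obj gf A b t \<eta> \<gamma> \<delta> \<beta> x l k (x (Suc k))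
          \<le> subproblem_obj gf A b t \<eta> \<gamma> \<delta> \<beta> x l k y"
    and l_step: "\<And>k. k \<ge> 1 \<Longrightarrow>
        l (Suc k) = extrap t l k + \<delta> *\<^sub>R (c_k t \<eta> k *\<^sub>R (A *v x (Suc k))
                     - (alpha_k t \<eta> k *\<^sub>R (A *v x k) + b))"
    and lim_x: "x \<longlonglongrightarrow> xs"
    and lim_l: "l \<longlonglongrightarrow> ls"
    and lim_KKT: "(xs, ls) \<in> KKT_set gf A b"
  shows "(\<lambda>k. norm (gf (x k) + transpose A *v l k)) \<in> o(\<lambda>k. 1 / t k)
         \<and> summable (\<lambda>k. t (Suc k) * (norm (gf (x k) + transpose A *v l k))\<^sup>2)"
proof -
  interpret aalm f gf A b L \<rho> \<eta> \<gamma> \<delta> \<beta> t x l xs ls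
    using assms by (intro aalm.intro) auto
  show ?thesis by (rule main_result)
qed

end
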